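(* Let $N\ge 2$, let $\lambda,\omega\in\mathbb{R}$, and consider on the phase space $\{(\mathbf{q},\mathbf{p})\in\mathbb{R}^N\times\mathbb{R}^N : 1+\lambda\mathbf{q}^2\neq 0\}$, with canonical Poisson bracket $\{q_i,p_j\}=\delta_{ij}$, the Hamiltonian $$\mathcal{H}_\lambda(\mathbf{q},\mathbf{p})=\frac{\mathbf{p}^2}{2(1+\lambda\mathbf{q}^2)}+\frac{\omega^2\mathbf{q}^2}{2(1+\lambda\mathbf{q}^2)}.$$ Then: (i) For any real $\lambda$, $\mathcal{H}_\lambda$ has the following constants of motion (functions Poisson-commuting with $\mathcal{H}_\lambda$): - the $2N-3$ angular momentum integrals $$C^{(m)}=\sum_{1\le i<j\le m}(q_ip_j-q_jp_i)^2,\qquad C_{(m)}=\sum_{N-m<i<j\le N}(q_ip_j-q_jp_i)^2,\qquad m=2,\dots,N,$$ where $C^{(N)}=C_{(N)}$; - the $N^2$ integrals (the curved Fradkin tensor) $$I_{ij}=p_ip_j-\bigl(2\lambda\,\mathcal{H}_\lambda(\mathbf{q},\mathbf{p})-\omega^2\bigr)q_iq_j,\qquad i,j=1,\dots,N,$$ which satisfy $\mathcal{H}_\lambda=\frac12\sum_{i=1}^N I_{ii}$. (ii) Each of the three sets $\{\mathcal{H}_\lambda, C^{(m)} : m=2,\dots,N\}$, $\{\mathcal{H}_\lambda, C_{(m)} : m=2,\dots,N\}$ and $\{I_{ii} : i=1,\dots,N\}$ consists of $N$ functionally independent functions in involution. (iii) For any fixed index $i\in\{1,\dots,N\}$, the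 set $\{\mathcal{H}_\lambda, C^{(m)}, C_{(m)}, I_{ii} : m=2,\dots,N\}$ consists of $2N-1$ functionally independent functions (so $\mathcal{H}_\lambda$ is maximally superintegrable).
   Context: Here $\mathbf{q}^2=\sum_{i=1}^N q_i^2$ and $\mathbf{p}^2=\sum_{i=1}^N p_i^2$. Functional independence means the differentials of the functions are linearly independent on an open dense subset of the phase space; involution means pairwise vanishing Poisson brackets. *)

theory Defs
  imports "HOL-Analysis.Analysis"
begin

text \<open>Phase space points are pairs (q,p) in R^N x R^N, where R^N = real ^ 'n with
  CARD('n) = N.  The index type is linearly ordered; coordinate number i (1-based,
  i = 1..N) refers to the i-th smallest element of the index type.\<close>

type_synonym 'n phase = "(real ^ 'n) \<times> (real ^ 'n)"

definition ix :: "nat \<Rightarrow> 'n::{finite,linorder}" where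
  "ix i = sorted_list_of_set (UNIV :: 'n set) ! (i - 1)"

definition qc :: "'n::{finite,linorder} phase \<Rightarrow> nat \<Rightarrow> real" where
  "qc x i = fst x $ ix i"

definition pc :: "'n::{finite,linorder} phase \<Rightarrow> nat \<Rightarrow> real" where
  "pc x i = snd x $ ix i"

definition qsq :: "'n::{finite,linorder} phase \<Rightarrow> real" where
  "qsq x = (\<Sum>i=1..CARD('n). (qc x i)\<^sup>2)"

definition psq :: "'n::{finite,linorder} phase \<Rightarrow> real" where
  "psq x = (\<Sum>i=1..CARD('n). (pc x i)\<^sup>2)"

definition phase_space :: "real \<Rightarrow> 'n::{finite,linorder} phase set" where
  "phase_space lam = {x. 1 + lam * qsq x \<noteq> 0}"

definition Ham :: "real \<Rightarrow> real \<Rightarrow> 'n::{finite,linorder} phase \<Rightarrow> real" where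
  "Ham lam \<omega> x = psq x / (2 * (1 + lam * qsq x)) + \<omega>\<^sup>2 * qsq x / (2 * (1 + lam * qsq x))"

definition angmom :: "'n::{finite,linorder} phase \<Rightarrow> nat \<Rightarrow> nat \<Rightarrow> real" where
  "angmom x i j = qc x i * pc x j - qc x j * pc x i"

definition Cup :: "nat \<Rightarrow> 'n::{finite,linorder} phase \<Rightarrow> real" where
  "Cup m x = (\<Sum>j\<in>{1..m}. \<Sum>i\<in>{1..<j}. (angmom x i j)\<^sup>2)"

definition Cdown :: "nat \<Rightarrow> 'n::{finite,linorder} phase \<Rightarrow> real" where
  "Cdown m x = (\<Sum>j\<in>{CARD('n) - m <..CARD('n)}. \<Sum>i\<in>{CARD('n) - m <..<j}. (angmom x i j)\<^sup>2)"

definition Frad :: "real \<Rightarrow> real \<Rightarrow> nat \<Rightarrow> nat \<Rightarrow> 'n::{finite,linorder} phase \<Rightarrow> real" where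
  "Frad lam \<omega> i j x = pc x i * pc x j - (2 * lam * Ham lam \<omega> x - \<omega>\<^sup>2) * qc x i * qc x j"

definition dq :: "('n::{finite,linorder} phase \<Rightarrow> real) \<Rightarrow> nat \<Rightarrow> 'n phase \<Rightarrow> real" where
  "dq F i x = frechet_derivative F (at x) (axis (ix i) 1, 0)"

definition dp :: "('n::{finite,linorder} phase \<Rightarrow> real) \<Rightarrow> nat \<Rightarrow> 'n phase \<Rightarrow> real" where
  "dp F i x = frechet_derivative F (at x) (0, axis (ix i) 1)"

definition poisson :: "('n::{finite,linorder} phase \<Rightarrow> real) \<Rightarrow> ('n phase \<Rightarrow> real) \<Rightarrow> 'n phase \<Rightarrow> real" where
  "poisson F G x = (\<Sum>i=1..CARD('n). dq F i x * dp G i x - dp F i x * dq G i x)"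

definition poisson_commute :: "'n::{finite,linorder} phase set \<Rightarrow> ('n phase \<Rightarrow> real) \<Rightarrow> ('n phase \<Rightarrow> real) \<Rightarrow> bool" where
  "poisson_commute M F G \<longleftrightarrow>
     (\<forall>x\<in>M. F differentiable (at x) \<and> G differentiable (at x) \<and> poisson F G x = 0)"

definition in_involution :: "'n::{finite,linorder} phase set \<Rightarrow> ('n phase \<Rightarrow> real) list \<Rightarrow> bool" where
  "in_involution M fs \<longleftrightarrow> (\<forall>k<length fs. \<forall>l<length fs. poisson_commute M (fs!k) (fs!l))"

definition differentials_indep :: "('n::{finite,linorder} phase \<Rightarrow> real) list \<Rightarrow> 'n phase \<Rightarrow> bool" where
  "differentials_indep fs x \<longleftrightarrow>
     (\<forall>k<length fs. (fs!k) differentiable (at x)) \<and>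
     (\<forall>c :: nat \<Rightarrow> real.
        (\<forall>v. (\<Sum>k<length fs. c k * frechet_derivative (fs!k) (at x) v) = 0) \<longrightarrow>
        (\<forall>k<length fs. c k = 0))"

definition funct_indep :: "'n::{finite,linorder} phase set \<Rightarrow> ('n phase \<Rightarrow> real) list \<Rightarrow> bool" where
  "funct_indep M fs \<longleftrightarrow>
     (\<exists>U. open U \<and> U \<subseteq> M \<and> M \<subseteq> closure U \<and> (\<forall>x\<in>U. differentials_indep fs x))"

end

theory Submission
  imports Defs "HOL-Computational_Algebra.Polynomial"
begin


lemma ix_bij: "bij_betw (ix :: nat \<Rightarrow> 'n::{finite,linorder}) {1..CARD('n)} UNIV"
proof -
  let ?xs = "sorted_list_of_set (UNIV :: 'n set)"
  have d: "distinct ?xs" and l: "length ?xs = CARD('n)" and s: "set ?xs = UNIV" by auto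
  have b1: "bij_betw ((!) ?xs) {..<CARD('n)} UNIV"
    by (rule bij_betw_nth) (use d l s in auto)
  have b2: "bij_betw (\<lambda>i. i - 1) {1..CARD('n)} {..<CARD('n)}"
    by (rule bij_betw_byWitness[where f'="\<lambda>i. i + 1"]) auto
  have "bij_betw ((!) ?xs \<circ> (\<lambda>i. i - 1)) {1..CARD('n)} UNIV"
    using b1 b2 bij_betw_trans by blast
  then show ?thesis unfolding ix_def comp_def by simp
qed

lemma ix_inj: "i \<in> {1..CARD('n)} \<Longrightarrow> j \<in> {1..CARD('n)} \<Longrightarrow> (ix i :: 'n::{finite,linorder}) = ix j \<longleftrightarrow> i = j"
  using ix_bij[where 'n='n] unfolding bij_betw_def inj_on_def by blast

definition ixinv :: "'n::{finite,linorder} \<Rightarrow> nat" where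
  "ixinv k = the_inv_into {1..CARD('n)} ix k"

lemma ixinv_ix: "i \<in> {1..CARD('n)} \<Longrightarrow> ixinv (ix i :: 'n::{finite,linorder}) = i"
  unfolding ixinv_def using ix_bij[where 'n='n]
  by (simp add: bij_betw_def the_inv_into_f_f)

definition VV :: "(nat \<Rightarrow> real) \<Rightarrow> (nat \<Rightarrow> real) \<Rightarrow> 'n::{finite,linorder} phase" where
  "VV u w = ((\<chi> k. u (ixinv k)), (\<chi> k. w (ixinv k)))"

lemma qc_VV[simp]: "i \<in> {1..CARD('n)} \<Longrightarrow> qc (VV u w :: 'n::{finite,linorder} phase) i = u i"
  by (simp add: qc_def VV_def ixinv_ix)
lemma pc_VV[simp]: "i \<in> {1..CARD('n)} \<Longrightarrow> pc (VV u w :: 'n::{finite,linorder} phase) i = w i"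
  by (simp add: pc_def VV_def ixinv_ix)

lemma qc_add[simp]: "qc (x + y) i = qc x i + qc y i" by (simp add: qc_def)
lemma pc_add[simp]: "pc (x + y) i = pc x i + pc y i" by (simp add: pc_def)
lemma qc_scale[simp]: "qc (c *\<^sub>R x) i = c * qc x i" by (simp add: qc_def)
lemma pc_scale[simp]: "pc (c *\<^sub>R x) i = c * pc x i" by (simp add: pc_def)

lemma bl_qc: "bounded_linear (\<lambda>x::'n::{finite,linorder} phase. qc x i)"
  unfolding qc_def by (intro bounded_linear_compose[OF bounded_linear_vec_nth] bounded_linear_fst)
lemma bl_pc: "bounded_linear (\<lambda>x::'n::{finite,linorder} phase. pc x i)"
  unfolding pc_def by (intro bounded_linear_compose[OF bounded_linear_vec_nth] bounded_linear_snd)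

definition grad :: "('n::{finite,linorder} phase \<Rightarrow> real) \<Rightarrow> 'n phase \<Rightarrow> (nat \<Rightarrow> real) \<Rightarrow> (nat \<Rightarrow> real) \<Rightarrow> bool" where
  "grad F x a b \<longleftrightarrow> (F has_derivative (\<lambda>h. \<Sum>i=1..CARD('n). a i * qc h i + b i * pc h i)) (at x)"

lemma grad_differentiable: "grad F x a b \<Longrightarrow> F differentiable (at x)"
  unfolding grad_def differentiable_def by blast

lemma grad_fd: "grad (F :: 'n::{finite,linorder} phase \<Rightarrow> real) x a b \<Longrightarrow> frechet_derivative F (at x) h = (\<Sum>i=1..CARD('n). a i * qc h i + b i * pc h i)"
proof -
  assume "grad F x a b"
  hence "(\<lambda>h. \<Sum>i=1..CARD('n). a i * qc h i + b i * pc h i) = frechet_derivative F (at x)"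
    unfolding grad_def by (rule frechet_derivative_at)
  from fun_cong[OF this, of h] show ?thesis by simp
qed

lemma grad_fd_VV: "grad (F :: 'n::{finite,linorder} phase \<Rightarrow> real) x a b \<Longrightarrow> frechet_derivative F (at x) (VV u w) = (\<Sum>i=1..CARD('n). a i * u i + b i * w i)"
  using grad_fd[of F x a b "VV u w"] by (auto intro!: sum.cong)

lemma ixinv_range: "ixinv (k::'n::{finite,linorder}) \<in> {1..CARD('n)}"
  and ix_ixinv: "ix (ixinv (k::'n::{finite,linorder})) = k"
proof -
  have b: "bij_betw (ix :: nat \<Rightarrow> 'n) {1..CARD('n)} UNIV" by (rule ix_bij)
  show "ixinv k \<in> {1..CARD('n)}" unfolding ixinv_def
    using b by (metis UNIV_I bij_betw_def the_inv_into_into subset_refl)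
  show "ix (ixinv k) = k" unfolding ixinv_def
    using b by (metis UNIV_I bij_betw_def f_the_inv_into_f)
qed

lemma axis_as_VV: "j \<in> {1..CARD('n)} \<Longrightarrow>
   ((axis (ix j) 1, 0) :: 'n::{finite,linorder} phase) = VV (\<lambda>i. if i = j then 1 else 0) (\<lambda>i. 0)"
  "j \<in> {1..CARD('n)} \<Longrightarrow>
   ((0, axis (ix j) 1) :: 'n::{finite,linorder} phase) = VV (\<lambda>i. 0) (\<lambda>i. if i = j then 1 else 0)"
proof -
  assume j: "j \<in> {1..CARD('n)}"
  have e: "ixinv k = j \<longleftrightarrow> k = ix j" for k :: 'n
    using ixinv_ix[OF j] ix_ixinv[of k] by metis
  show "((axis (ix j) 1, 0) :: 'n phase) = VV (\<lambda>i. if i = j then 1 else 0) (\<lambda>i. 0)"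
    unfolding VV_def by (simp add: vec_eq_iff axis_def e)
  show "((0, axis (ix j) 1) :: 'n phase) = VV (\<lambda>i. 0) (\<lambda>i. if i = j then 1 else 0)"
    unfolding VV_def by (simp add: vec_eq_iff axis_def e)
qed


lemma mult_if_delta: "(if P then 1 else 0) * (y::real) = (if P then y else 0)" by simp

lemma grad_cong: "grad F x a b \<Longrightarrow> (\<And>i. i \<in> {1..CARD('n)} \<Longrightarrow> a i = a' i) \<Longrightarrow>
   (\<And>i. i \<in> {1..CARD('n)} \<Longrightarrow> b i = b' i) \<Longrightarrow> grad (F :: 'n::{finite,linorder} phase \<Rightarrow> real) x a' b'"
  unfolding grad_def by (erule has_derivative_eq_rhs) (auto intro!: sum.cong ext)

lemma grad_qc: "k \<in> {1..CARD('n)} \<Longrightarrow> grad (\<lambda>x::'n::{finite,linorder} phase. qc x k) x (\<lambda>i. if i = k then 1 else 0) (\<lambda>i. 0)"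
  unfolding grad_def
  by (rule has_derivative_eq_rhs[OF bounded_linear_imp_has_derivative[OF bl_qc]])
     (auto simp: mult_if_delta intro!: ext)

lemma grad_pc: "k \<in> {1..CARD('n)} \<Longrightarrow> grad (\<lambda>x::'n::{finite,linorder} phase. pc x k) x (\<lambda>i. 0) (\<lambda>i. if i = k then 1 else 0)"
  unfolding grad_def
  by (rule has_derivative_eq_rhs[OF bounded_linear_imp_has_derivative[OF bl_pc]])
     (auto simp: mult_if_delta intro!: ext)

lemma grad_const: "grad (\<lambda>x::'n::{finite,linorder} phase. c) x (\<lambda>i. 0) (\<lambda>i. 0)"
  unfolding grad_def by (rule has_derivative_eq_rhs[OF has_derivative_const]) auto

lemma grad_add: "grad F x a b \<Longrightarrow> grad G x c d \<Longrightarrow>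
  grad (\<lambda>x::'n::{finite,linorder} phase. F x + G x) x (\<lambda>i. a i + c i) (\<lambda>i. b i + d i)"
  unfolding grad_def
  by (rule has_derivative_eq_rhs[OF has_derivative_add])
     (auto simp: sum.distrib[symmetric] algebra_simps intro!: ext)

lemma grad_diff: "grad F x a b \<Longrightarrow> grad G x c d \<Longrightarrow>
  grad (\<lambda>x::'n::{finite,linorder} phase. F x - G x) x (\<lambda>i. a i - c i) (\<lambda>i. b i - d i)"
  unfolding grad_def
  by (rule has_derivative_eq_rhs[OF has_derivative_diff])
     (auto simp: sum_subtractf[symmetric] algebra_simps intro!: ext)

lemma grad_mult: "grad F x a b \<Longrightarrow> grad G x c d \<Longrightarrow>
  grad (\<lambda>x::'n::{finite,linorder} phase. F x * G x) x (\<lambda>i. F x * c i + G x * a i) (\<lambda>i. F x * d i + G x * b i)"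
  unfolding grad_def
  by (rule has_derivative_eq_rhs[OF has_derivative_mult])
     (auto simp: sum.distrib[symmetric] sum_distrib_left sum_distrib_right algebra_simps intro!: ext)

lemma grad_cmult: "grad F x a b \<Longrightarrow>
  grad (\<lambda>x::'n::{finite,linorder} phase. k * F x) x (\<lambda>i. k * a i) (\<lambda>i. k * b i)"
proof -
  assume g: "grad F x a b"
  have "grad (\<lambda>x::'n phase. k) x (\<lambda>i. 0) (\<lambda>i. 0)" by (rule grad_const)
  from grad_mult[OF this g] show ?thesis by simp
qed

lemma grad_inverse:
  assumes g: "grad F x a b" and nz: "F x \<noteq> 0"
  shows "grad (\<lambda>x::'n::{finite,linorder} phase. inverse (F x)) x (\<lambda>i. - a i / (F x)^2) (\<lambda>i. - b i / (F x)^2)"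
  unfolding grad_def
proof (rule has_derivative_eq_rhs[OF Deriv.has_derivative_inverse[OF nz g[unfolded grad_def]]], rule ext)
  fix h
  have "(\<Sum>i = 1..CARD('n). - a i / (F x)\<^sup>2 * qc h i + - b i / (F x)\<^sup>2 * pc h i)
     = (\<Sum>i = 1..CARD('n). (a i * qc h i + b i * pc h i) * (- 1 / (F x)\<^sup>2))"
    by (rule sum.cong) (auto simp: field_simps add_divide_distrib)
  also have "\<dots> = (\<Sum>i = 1..CARD('n). a i * qc h i + b i * pc h i) * (- 1 / (F x)\<^sup>2)"
    by (rule sum_distrib_right[symmetric])
  finally show "- (inverse (F x) * (\<Sum>i = 1..CARD('n). a i * qc h i + b i * pc h i) * inverse (F x)) =
    (\<Sum>i = 1..CARD('n). - a i / (F x)\<^sup>2 * qc h i + - b i / (F x)\<^sup>2 * pc h i)"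
    using nz by (simp add: field_simps power2_eq_square)
qed

lemma grad_sum: "finite S \<Longrightarrow> (\<And>j. j \<in> S \<Longrightarrow> grad (F j) x (a j) (b j)) \<Longrightarrow>
  grad (\<lambda>x::'n::{finite,linorder} phase. \<Sum>j\<in>S. F j x) x (\<lambda>i. \<Sum>j\<in>S. a j i) (\<lambda>i. \<Sum>j\<in>S. b j i)"
proof (induction S rule: finite_induct)
  case empty then show ?case by (simp add: grad_const)
next
  case (insert y S)
  have "grad (F y) x (a y) (b y)" using insert.prems by simp
  moreover have "grad (\<lambda>x. \<Sum>j\<in>S. F j x) x (\<lambda>i. \<Sum>j\<in>S. a j i) (\<lambda>i. \<Sum>j\<in>S. b j i)"
    using insert.IH insert.prems by simp
  ultimately show ?case using grad_add insert.hyps by fastforce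
qed


definition QA :: "nat set \<Rightarrow> 'n::{finite,linorder} phase \<Rightarrow> real" where "QA A x = (\<Sum>i\<in>A. (qc x i)^2)"
definition PA :: "nat set \<Rightarrow> 'n::{finite,linorder} phase \<Rightarrow> real" where "PA A x = (\<Sum>i\<in>A. (pc x i)^2)"
definition SA :: "nat set \<Rightarrow> 'n::{finite,linorder} phase \<Rightarrow> real" where "SA A x = (\<Sum>i\<in>A. qc x i * pc x i)"
definition CA :: "nat set \<Rightarrow> 'n::{finite,linorder} phase \<Rightarrow> real" where "CA A x = QA A x * PA A x - (SA A x)^2"

lemma sum_delta_mult: "finite A \<Longrightarrow> (\<Sum>j\<in>A. f j * (if i = j then 1 else 0)) = (if i \<in> A then (f i::real) else 0)"
  by (simp add: if_distrib[of "\<lambda>z. f _ * z"] sum.delta cong: if_cong)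

lemma sum_delta_mult': "finite A \<Longrightarrow> (\<Sum>j\<in>A. (if i = j then 1 else 0) * f j) = (if i \<in> A then (f i::real) else 0)"
  using sum_delta_mult[of A f i] by (simp add: mult.commute)

lemma sum_delta_mult2[simp]: "finite A \<Longrightarrow> (\<Sum>j\<in>A. f j * (if j = i then 1 else 0)) = (if i \<in> A then (f i::real) else 0)"
  by (simp add: if_distrib[of "\<lambda>z. f _ * z"] sum.delta' cong: if_cong)

context fixes x :: "'n::{finite,linorder} phase" begin

lemma grad_QA: assumes "A \<subseteq> {1..CARD('n)}"
  shows "grad (QA A) x (\<lambda>i. if i \<in> A then 2 * qc x i else 0) (\<lambda>i. 0)"
proof -
  have f: "finite A" using assms finite_subset by blast
  have e: "QA A = (\<lambda>x. \<Sum>j\<in>A. qc x j * qc x j)" by (auto simp: QA_def power2_eq_square fun_eq_iff)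
  have "grad (\<lambda>x. \<Sum>j\<in>A. qc x j * qc x j) x
     (\<lambda>i. \<Sum>j\<in>A. qc x j * (if i = j then 1 else 0) + qc x j * (if i = j then 1 else 0))
     (\<lambda>i. \<Sum>j\<in>A. qc x j * 0 + qc x j * 0)"
    by (rule grad_sum[OF f]) (rule grad_mult; rule grad_qc; use assms in blast)
  then have "grad (QA A) x
     (\<lambda>i. \<Sum>j\<in>A. qc x j * (if i = j then 1 else 0) + qc x j * (if i = j then 1 else 0))
     (\<lambda>i. \<Sum>j\<in>A. qc x j * 0 + qc x j * 0)"
    unfolding e .
  then show ?thesis
    by (rule grad_cong) (simp_all add: sum.distrib sum_distrib_left[symmetric] sum_delta_mult f)
qed

lemma grad_PA: assumes "A \<subseteq> {1..CARD('n)}"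
  shows "grad (PA A) x (\<lambda>i. 0) (\<lambda>i. if i \<in> A then 2 * pc x i else 0)"
proof -
  have f: "finite A" using assms finite_subset by blast
  have e: "PA A = (\<lambda>x. \<Sum>j\<in>A. pc x j * pc x j)" by (auto simp: PA_def power2_eq_square fun_eq_iff)
  have "grad (\<lambda>x. \<Sum>j\<in>A. pc x j * pc x j) x
     (\<lambda>i. \<Sum>j\<in>A. pc x j * 0 + pc x j * 0)
     (\<lambda>i. \<Sum>j\<in>A. pc x j * (if i = j then 1 else 0) + pc x j * (if i = j then 1 else 0))"
    by (rule grad_sum[OF f]) (rule grad_mult; rule grad_pc; use assms in blast)
  then have "grad (PA A) x
     (\<lambda>i. \<Sum>j\<in>A. pc x j * 0 + pc x j * 0)
     (\<lambda>i. \<Sum>j\<in>A. pc x j * (if i = j then 1 else 0) + pc x j * (if i = j then 1 else 0))"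
    unfolding e .
  then show ?thesis
    by (rule grad_cong) (simp_all add: sum.distrib sum_distrib_left[symmetric] sum_delta_mult f)
qed

lemma grad_SA: assumes "A \<subseteq> {1..CARD('n)}"
  shows "grad (SA A) x (\<lambda>i. if i \<in> A then pc x i else 0) (\<lambda>i. if i \<in> A then qc x i else 0)"
proof -
  have f: "finite A" using assms finite_subset by blast
  have e: "SA A = (\<lambda>x. \<Sum>j\<in>A. qc x j * pc x j)" by (auto simp: SA_def power2_eq_square fun_eq_iff)
  have "grad (\<lambda>x. \<Sum>j\<in>A. qc x j * pc x j) x
     (\<lambda>i. \<Sum>j\<in>A. qc x j * 0 + pc x j * (if i = j then 1 else 0))
     (\<lambda>i. \<Sum>j\<in>A. qc x j * (if i = j then 1 else 0) + pc x j * 0)"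
    by (rule grad_sum[OF f]) (rule grad_mult; (rule grad_qc | rule grad_pc); use assms in blast)
  then have "grad (SA A) x
     (\<lambda>i. \<Sum>j\<in>A. qc x j * 0 + pc x j * (if i = j then 1 else 0))
     (\<lambda>i. \<Sum>j\<in>A. qc x j * (if i = j then 1 else 0) + pc x j * 0)"
    unfolding e .
  then show ?thesis
    by (rule grad_cong) (simp_all add: sum_delta_mult f)
qed

lemma grad_CA: assumes "A \<subseteq> {1..CARD('n)}"
  shows "grad (CA A) x (\<lambda>i. if i \<in> A then 2 * (PA A x * qc x i - SA A x * pc x i) else 0)
                       (\<lambda>i. if i \<in> A then 2 * (QA A x * pc x i - SA A x * qc x i) else 0)"
proof -
  have e: "CA A = (\<lambda>x. QA A x * PA A x - SA A x * SA A x)" by (auto simp: CA_def power2_eq_square fun_eq_iff)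
  show ?thesis unfolding e
    by (rule grad_cong[OF grad_diff[OF grad_mult[OF grad_QA[OF assms] grad_PA[OF assms]] grad_mult[OF grad_SA[OF assms] grad_SA[OF assms]]]])
       (auto simp: algebra_simps)
qed


lemma grad_Ham:
  fixes lam \<omega> :: real
  defines "D \<equiv> 1 + lam * qsq x"
  assumes nz: "D \<noteq> 0"
  shows "grad (Ham lam \<omega>) x (\<lambda>i. ((\<omega>^2 - lam * psq x) / D^2) * qc x i) (\<lambda>i. pc x i / D)"
proof -
  let ?U = "{1..CARD('n)}"
  have qs: "\<And>y::'n phase. qsq y = QA ?U y" and ps: "\<And>y::'n phase. psq y = PA ?U y" by (auto simp: qsq_def psq_def QA_def PA_def)
  have e: "Ham lam \<omega> = (\<lambda>x::'n phase. (PA ?U x + \<omega>^2 * QA ?U x) * inverse (2 * (1 + lam * QA ?U x)))"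
    by (auto simp: fun_eq_iff Ham_def qs ps add_divide_distrib divide_inverse distrib_right)
  have nz2: "2 * (1 + lam * QA ?U x) \<noteq> 0" using nz by (simp add: D_def qs)
  have DD: "D = 1 + lam * QA ?U x" by (simp add: D_def qs)
  have gP: "grad (PA ?U) x (\<lambda>i. 0) (\<lambda>i. if i \<in> ?U then 2 * pc x i else 0)" by (rule grad_PA) simp
  have gQ: "grad (QA ?U) x (\<lambda>i. if i \<in> ?U then 2 * qc x i else 0) (\<lambda>i. 0)" by (rule grad_QA) simp
  show ?thesis unfolding e
    apply (rule grad_cong[OF grad_mult[OF grad_add[OF gP grad_cmult[OF gQ]] grad_inverse[OF grad_cmult[OF grad_add[OF grad_const grad_cmult[OF gQ]]] nz2]]])
    subgoal for i
      using nz unfolding DD[symmetric] ps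
      by (simp add: field_simps power2_eq_square) (simp add: DD algebra_simps)
    subgoal for i
      using nz unfolding DD[symmetric] ps
      by (simp add: field_simps power2_eq_square)
    done
qed

definition Kf :: "real \<Rightarrow> real \<Rightarrow> 'n::{finite,linorder} phase \<Rightarrow> real" where
  "Kf lam \<omega> y = 2 * lam * Ham lam \<omega> y - \<omega>^2"

lemma grad_Frad:
  fixes lam \<omega> :: real
  defines "D \<equiv> 1 + lam * qsq x"
  assumes nz: "D \<noteq> 0" and ij: "i \<in> {1..CARD('n)}" "j \<in> {1..CARD('n)}"
  shows "grad (Frad lam \<omega> i j) x
    (\<lambda>k. - (2 * lam * ((\<omega>^2 - lam * psq x) / D^2) * qc x k) * qc x i * qc x j
          - Kf lam \<omega> x * ((if k = i then 1 else 0) * qc x j + qc x i * (if k = j then 1 else 0)))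
    (\<lambda>k. (if k = i then 1 else 0) * pc x j + pc x i * (if k = j then 1 else 0)
          - 2 * lam * (pc x k / D) * qc x i * qc x j)"
proof -
  have e: "Frad lam \<omega> i j = (\<lambda>x::'n phase. pc x i * pc x j - (2 * lam * Ham lam \<omega> x - \<omega>\<^sup>2) * qc x i * qc x j)"
    by (auto simp: fun_eq_iff Frad_def)
  show ?thesis unfolding e
    apply (rule grad_cong[OF grad_diff[OF grad_mult[OF grad_pc grad_pc] grad_mult[OF grad_mult[OF grad_diff[OF grad_cmult[OF grad_Ham] grad_const] grad_qc] grad_qc]]])
    using nz ij by (auto simp: D_def Kf_def algebra_simps)
qed

lemma lagrange:
  fixes u w :: "nat \<Rightarrow> real" and a b :: nat
  shows "(\<Sum>j\<in>{a<..b}. \<Sum>i\<in>{a<..<j}. (u i * w j - u j * w i)^2)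
    = (\<Sum>i\<in>{a<..b}. (u i)^2) * (\<Sum>i\<in>{a<..b}. (w i)^2) - (\<Sum>i\<in>{a<..b}. u i * w i)^2"
proof (induction b)
  case 0 then show ?case by simp
next
  case (Suc b)
  show ?case
  proof (cases "a \<le> b")
    case True
    have s1: "{a<..Suc b} = insert (Suc b) {a<..b}" using True by auto
    have s2: "{a<..<Suc b} = {a<..b}" by auto
    have inner: "(\<Sum>i\<in>{a<..b}. (u i * w (Suc b) - u (Suc b) * w i)^2)
       = (w (Suc b))^2 * (\<Sum>i\<in>{a<..b}. (u i)^2) - 2 * u (Suc b) * w (Suc b) * (\<Sum>i\<in>{a<..b}. u i * w i)
         + (u (Suc b))^2 * (\<Sum>i\<in>{a<..b}. (w i)^2)"
      by (simp add: power2_diff sum.distrib sum_subtractf sum_distrib_left algebra_simps power2_eq_square)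
    show ?thesis using Suc.IH
      by (simp add: s1 s2 inner) (simp add: algebra_simps power2_eq_square)
  next
    case False
    then have "{a<..Suc b} = {}" "{a<..b} = {}" by auto
    then show ?thesis by simp
  qed
qed

end

lemma Cup_CA: "Cup m = CA {0<..m}"
proof (rule ext)
  fix x :: "'n::{finite,linorder} phase"
  have "Cup m x = (\<Sum>j\<in>{0<..m}. \<Sum>i\<in>{0<..<j}. (qc x i * pc x j - qc x j * pc x i)^2)"
    unfolding Cup_def angmom_def
    by (rule sum.cong) (auto intro!: sum.cong)
  also have "\<dots> = CA {0<..m} x" unfolding lagrange CA_def QA_def PA_def SA_def ..
  finally show "Cup m x = CA {0<..m} x" .
qed

lemma Cdown_CA: "(Cdown m :: 'n::{finite,linorder} phase \<Rightarrow> real) = CA {CARD('n) - m<..CARD('n)}"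
  by (rule ext) (simp add: Cdown_def angmom_def lagrange CA_def QA_def PA_def SA_def)


lemma sum_delta_U: "i \<in> {1..CARD('n::{finite,linorder})} \<Longrightarrow>
  (\<Sum>k=1..CARD('n). f k * (if k = i then 1 else 0) + g k * 0) = (f i :: real)"
  by (simp add: sum_delta_mult)

context fixes x :: "'n::{finite,linorder} phase" begin

lemma dq_grad: "grad F x a b \<Longrightarrow> i \<in> {1..CARD('n)} \<Longrightarrow> dq F i x = a i"
  unfolding dq_def by (simp add: axis_as_VV grad_fd_VV sum_delta_mult)

lemma dp_grad: "grad F x a b \<Longrightarrow> i \<in> {1..CARD('n)} \<Longrightarrow> dp F i x = b i"
  unfolding dp_def by (simp add: axis_as_VV grad_fd_VV sum_delta_mult)

lemma poisson_grad: "grad F x a b \<Longrightarrow> grad G x c d \<Longrightarrow>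
   poisson F G x = (\<Sum>i=1..CARD('n). a i * d i - b i * c i)"
  unfolding poisson_def by (rule sum.cong) (auto simp: dq_grad dp_grad)

end

lemma poisson_self: "poisson F F x = 0"
  unfolding poisson_def by (simp add: mult.commute)

lemma poisson_anti: "poisson F G x = - poisson G F x"
  unfolding poisson_def by (simp add: sum_negf[symmetric] mult.commute)

lemma sum_if_subset: "A \<subseteq> B \<Longrightarrow> finite B \<Longrightarrow> (\<Sum>i\<in>B. if i \<in> A then f i else 0) = (\<Sum>i\<in>A. (f i :: real))"
  by (simp add: sum.If_cases Int_absorb1)

lemma sum_lin3: "(\<Sum>i\<in>A. c1 * (q i * p i) + c2 * (p i)^2 + c3 * (q i)^2) =
   c1 * (\<Sum>i\<in>A. q i * p i) + c2 * (\<Sum>i\<in>A. (p i)^2) + c3 * (\<Sum>i\<in>A. (q i)^2 :: real)"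
  by (simp add: sum.distrib sum_distrib_left)

context fixes x :: "'n::{finite,linorder} phase" begin

lemma poisson_CA_Ham:
  fixes lam \<omega> :: real
  assumes A: "A \<subseteq> {1..CARD('n)}" and nz: "1 + lam * qsq x \<noteq> 0"
  shows "poisson (CA A) (Ham lam \<omega>) x = 0"
proof -
  define D where "D = 1 + lam * qsq x"
  define \<alpha> where "\<alpha> = (\<omega>^2 - lam * psq x) / D^2"
  have D: "D \<noteq> 0" using nz D_def by simp
  have "poisson (CA A) (Ham lam \<omega>) x = (\<Sum>i=1..CARD('n).
     (if i \<in> A then 2 * (PA A x * qc x i - SA A x * pc x i) else 0) * (pc x i / D)
   - (if i \<in> A then 2 * (QA A x * pc x i - SA A x * qc x i) else 0) * (\<alpha> * qc x i))"
    using poisson_grad[OF grad_CA[OF A] grad_Ham[OF nz]] by (simp add: D_def \<alpha>_def)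
  also have "\<dots> = (\<Sum>i=1..CARD('n). if i \<in> A then
     (2 * PA A x / D - 2 * QA A x * \<alpha>) * (qc x i * pc x i) + (- 2 * SA A x / D) * (pc x i)^2
       + (2 * SA A x * \<alpha>) * (qc x i)^2 else 0)"
    by (rule sum.cong) (use D in \<open>auto simp: field_simps power2_eq_square\<close>)
  also have "\<dots> = (2 * PA A x / D - 2 * QA A x * \<alpha>) * SA A x + (- 2 * SA A x / D) * PA A x
       + (2 * SA A x * \<alpha>) * QA A x"
    by (simp only: sum_if_subset[OF A finite_atLeastAtMost] sum_lin3 SA_def PA_def QA_def)
  also have "\<dots> = 0" by (simp add: algebra_simps)
  finally show ?thesis .
qed

lemma poisson_CA_CA:
  assumes A: "A \<subseteq> B" and B: "B \<subseteq> {1..CARD('n)}"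
  shows "poisson (CA A) (CA B) x = 0"
proof -
  have A': "A \<subseteq> {1..CARD('n)}" using A B by blast
  have "poisson (CA A) (CA B) x = (\<Sum>i=1..CARD('n).
     (if i \<in> A then 2 * (PA A x * qc x i - SA A x * pc x i) else 0) *
     (if i \<in> B then 2 * (QA B x * pc x i - SA B x * qc x i) else 0)
   - (if i \<in> A then 2 * (QA A x * pc x i - SA A x * qc x i) else 0) *
     (if i \<in> B then 2 * (PA B x * qc x i - SA B x * pc x i) else 0))"
    using poisson_grad[OF grad_CA[OF A'] grad_CA[OF B]] by simp
  also have "\<dots> = (\<Sum>i=1..CARD('n). if i \<in> A then
     (4 * (PA A x * QA B x - QA A x * PA B x)) * (qc x i * pc x i)
     + (4 * (QA A x * SA B x - SA A x * QA B x)) * (pc x i)^2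
     + (4 * (SA A x * PA B x - PA A x * SA B x)) * (qc x i)^2 else 0)"
    by (rule sum.cong) (use A in \<open>auto simp: algebra_simps power2_eq_square\<close>)
  also have "\<dots> = (4 * (PA A x * QA B x - QA A x * PA B x)) * SA A x
     + (4 * (QA A x * SA B x - SA A x * QA B x)) * PA A x
     + (4 * (SA A x * PA B x - PA A x * SA B x)) * QA A x"
    by (simp only: sum_if_subset[OF A' finite_atLeastAtMost] sum_lin3 SA_def PA_def QA_def)
  also have "\<dots> = 0" by (simp add: algebra_simps)
  finally show ?thesis .
qed

lemma K_alpha:
  fixes lam \<omega> :: real
  assumes nz: "1 + lam * qsq x \<noteq> 0"
  shows "Kf lam \<omega> x / (1 + lam * qsq x) + (\<omega>^2 - lam * psq x) / (1 + lam * qsq x)^2 = 0"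
proof -
  define D where "D = 1 + lam * qsq x"
  have D: "D \<noteq> 0" using nz D_def by simp
  have "Kf lam \<omega> x / D + (\<omega>^2 - lam * psq x) / D^2 = 0"
    unfolding Kf_def Ham_def D_def[symmetric] using D
    by (simp add: field_simps power2_eq_square) (simp add: D_def algebra_simps)
  then show ?thesis by (simp add: D_def)
qed

lemma sum_delta2: "i \<in> {1..CARD('n)} \<Longrightarrow> j \<in> {1..CARD('n)} \<Longrightarrow>
  (\<Sum>k=1..CARD('n). c1 * (qc x k * pc x k) + (if k = i then f1 else 0) + (if k = j then f2 else 0))
  = c1 * SA {1..CARD('n)} x + f1 + (f2::real)"
  by (simp add: sum.distrib sum_distrib_left SA_def)

lemma poisson_Frad_Ham:
  fixes lam \<omega> :: real
  assumes nz: "1 + lam * qsq x \<noteq> 0" and ij: "i \<in> {1..CARD('n)}" "j \<in> {1..CARD('n)}"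
  shows "poisson (Frad lam \<omega> i j) (Ham lam \<omega>) x = 0"
proof -
  define D where "D = 1 + lam * qsq x"
  define \<alpha> where "\<alpha> = (\<omega>^2 - lam * psq x) / D^2"
  define K where "K = Kf lam \<omega> x"
  have KA: "K / D + \<alpha> = 0" using K_alpha[OF nz] by (simp add: K_def D_def \<alpha>_def)
  have D: "D \<noteq> 0" using nz D_def by simp
  have "poisson (Frad lam \<omega> i j) (Ham lam \<omega>) x = (\<Sum>k=1..CARD('n).
     (- (2 * lam * \<alpha> * qc x k) * qc x i * qc x j
          - K * ((if k = i then 1 else 0) * qc x j + qc x i * (if k = j then 1 else 0))) * (pc x k / D)
   - ((if k = i then 1 else 0) * pc x j + pc x i * (if k = j then 1 else 0)
          - 2 * lam * (pc x k / D) * qc x i * qc x j) * (\<alpha> * qc x k))"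
    using poisson_grad[OF grad_Frad[OF nz ij] grad_Ham[OF nz]] by (simp add: D_def \<alpha>_def K_def)
  also have "\<dots> = (\<Sum>k=1..CARD('n). 0 * (qc x k * pc x k)
     + (if k = i then - K * qc x j * pc x i / D - pc x j * \<alpha> * qc x i else 0)
     + (if k = j then - K * qc x i * pc x j / D - pc x i * \<alpha> * qc x j else 0))"
    by (rule sum.cong) (use D in \<open>auto simp: field_simps\<close>)
  also have "\<dots> = (- K / D - \<alpha>) * (qc x j * pc x i + qc x i * pc x j)"
    using ij by (simp only: sum_delta2) (simp add: field_simps)
  also have "\<dots> = 0"
  proof -
    have "- K / D - \<alpha> = 0" using KA by linarith
    then show ?thesis by simp
  qed
  finally show ?thesis .
qed

lemma poisson_Frad_Frad:
  fixes lam \<omega> :: real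
  assumes nz: "1 + lam * qsq x \<noteq> 0" and ij: "i \<in> {1..CARD('n)}" "j \<in> {1..CARD('n)}"
  shows "poisson (Frad lam \<omega> i i) (Frad lam \<omega> j j) x = 0"
proof (cases "i = j")
  case True then show ?thesis by (simp add: poisson_self)
next
  case False
  define D where "D = 1 + lam * qsq x"
  define \<alpha> where "\<alpha> = (\<omega>^2 - lam * psq x) / D^2"
  define K where "K = Kf lam \<omega> x"
  have KA: "K / D + \<alpha> = 0" using K_alpha[OF nz] by (simp add: K_def D_def \<alpha>_def)
  have D: "D \<noteq> 0" using nz D_def by simp
  have "poisson (Frad lam \<omega> i i) (Frad lam \<omega> j j) x = (\<Sum>k=1..CARD('n).
     (- (2 * lam * \<alpha> * qc x k) * qc x i * qc x i
          - K * ((if k = i then 1 else 0) * qc x i + qc x i * (if k = i then 1 else 0))) *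
     ((if k = j then 1 else 0) * pc x j + pc x j * (if k = j then 1 else 0)
          - 2 * lam * (pc x k / D) * qc x j * qc x j)
   - ((if k = i then 1 else 0) * pc x i + pc x i * (if k = i then 1 else 0)
          - 2 * lam * (pc x k / D) * qc x i * qc x i) *
     (- (2 * lam * \<alpha> * qc x k) * qc x j * qc x j
          - K * ((if k = j then 1 else 0) * qc x j + qc x j * (if k = j then 1 else 0))))"
    using poisson_grad[OF grad_Frad[OF nz ij(1) ij(1)] grad_Frad[OF nz ij(2) ij(2)]]
    by (simp add: D_def \<alpha>_def K_def)
  also have "\<dots> = (\<Sum>k=1..CARD('n). 0 * (qc x k * pc x k)
     + (if k = i then 4 * K * lam * qc x i * pc x i * (qc x j)^2 / D + 4 * lam * \<alpha> * pc x i * qc x i * (qc x j)^2 else 0)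
     + (if k = j then - 4 * lam * \<alpha> * (qc x i)^2 * qc x j * pc x j - 4 * lam * K * (qc x i)^2 * pc x j * qc x j / D else 0))"
    by (rule sum.cong) (use False in \<open>auto simp: field_simps power2_eq_square\<close>)
  also have "\<dots> = 4 * lam * (K / D + \<alpha>) * (qc x i * pc x i * (qc x j)^2 - (qc x i)^2 * qc x j * pc x j)"
    using ij by (simp only: sum_delta2) (simp add: field_simps)
  also have "\<dots> = 0" using KA by simp
  finally show ?thesis .
qed

lemma Ham_Frad_sum:
  fixes lam \<omega> :: real
  assumes nz: "1 + lam * qsq x \<noteq> 0"
  shows "Ham lam \<omega> x = (1/2) * (\<Sum>i=1..CARD('n). Frad lam \<omega> i i x)"
proof -
  define D where "D = 1 + lam * qsq x"
  have D: "D \<noteq> 0" using nz D_def by simp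
  have "(\<Sum>i=1..CARD('n). Frad lam \<omega> i i x) = psq x - (2 * lam * Ham lam \<omega> x - \<omega>^2) * qsq x"
    by (simp add: Frad_def sum_subtractf sum.distrib sum_distrib_left psq_def qsq_def power2_eq_square algebra_simps)
  also have "\<dots> = 2 * Ham lam \<omega> x"
    unfolding Ham_def D_def[symmetric] using D
    by (simp add: field_simps power2_eq_square) (simp add: D_def algebra_simps)
  finally show ?thesis by simp
qed

end


definition good :: "('a::real_normed_vector \<Rightarrow> real) \<Rightarrow> bool" where
  "good g \<longleftrightarrow> continuous_on UNIV g \<and> (\<forall>x v. \<exists>P. \<forall>t. g (x + t *\<^sub>R v) = poly P t)"

lemma good_const[simp, intro]: "good (\<lambda>x. c)"
  unfolding good_def by (auto intro!: exI[of _ "[:c:]"] continuous_intros)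

lemma good_add[intro]: "good f \<Longrightarrow> good g \<Longrightarrow> good (\<lambda>x. f x + g x)"
  unfolding good_def
  apply (auto intro!: continuous_intros)
  subgoal for x v
    apply (erule allE[of _ x], erule allE[of _ v], erule exE)+
    subgoal for P Q by (rule exI[of _ "P + Q"]) simp
    done
  done

lemma good_mult[intro]: "good f \<Longrightarrow> good g \<Longrightarrow> good (\<lambda>x. f x * g x)"
  unfolding good_def
  apply (auto intro!: continuous_intros)
  subgoal for x v
    apply (erule allE[of _ x], erule allE[of _ v], erule exE)+
    subgoal for P Q by (rule exI[of _ "P * Q"]) simp
    done
  done

lemma good_minus[intro]: "good f \<Longrightarrow> good (\<lambda>x. - f x)"
  using good_mult[of "\<lambda>x. -1" f] by simp

lemma good_diff[intro]: "good f \<Longrightarrow> good g \<Longrightarrow> good (\<lambda>x. f x - g x)"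
  using good_add[of f "\<lambda>x. - g x"] good_minus[of g] by simp

lemma good_power[intro]: "good f \<Longrightarrow> good (\<lambda>x. f x ^ n)"
  by (induction n) (auto simp: good_mult)

lemma good_sum[intro]: "(\<And>j. j \<in> S \<Longrightarrow> good (f j)) \<Longrightarrow> good (\<lambda>x. \<Sum>j\<in>S. f j x)"
proof (induction S rule: infinite_finite_induct)
  case (infinite A) then show ?case by simp
next
  case empty then show ?case by simp
next
  case (insert y S) then show ?case using good_add[of "f y" "\<lambda>x. \<Sum>j\<in>S. f j x"] by simp
qed

lemma good_qc[intro]: "good (\<lambda>x::'n::{finite,linorder} phase. qc x i)"
  unfolding good_def
  by (auto simp: linear_continuous_on bl_qc intro!: exI[of _ "[:qc _ i, qc _ i:]"])

lemma good_pc[intro]: "good (\<lambda>x::'n::{finite,linorder} phase. pc x i)"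
  unfolding good_def
  by (auto simp: linear_continuous_on bl_pc intro!: exI[of _ "[:pc _ i, pc _ i:]"])

lemma good_QA[intro]: "good (QA A)" "good (PA A)" "good (SA A)"
  unfolding QA_def PA_def SA_def by (auto intro!: good_sum good_power good_mult)

lemma good_qsq[intro]: "good qsq" "good psq"
  unfolding qsq_def psq_def by (auto intro!: good_sum good_power)

lemma good_dense:
  fixes g :: "'a::real_normed_vector \<Rightarrow> real"
  assumes g: "good g" and y: "g y \<noteq> 0"
  shows "closure {x. g x \<noteq> 0} = UNIV"
proof -
  { fix x :: 'a
    obtain P where P: "\<And>t. g (x + t *\<^sub>R (y - x)) = poly P t"
      using g unfolding good_def by blast
    have "poly P 1 \<noteq> 0" using P[of 1] y by simp
    then have P0: "P \<noteq> 0" by auto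
    have fin: "finite {t. poly P t = 0}" by (rule poly_roots_finite[OF P0])
    have "\<forall>e>0. \<exists>z\<in>{x. g x \<noteq> 0}. dist z x < e"
    proof (intro allI impI)
      fix e :: real assume e: "e > 0"
      define d where "d = e / (norm (y - x) + 1)"
      have d: "d > 0" using e unfolding d_def by (intro divide_pos_pos) (auto intro: add_nonneg_pos)
      have "infinite {0<..<d}" using d by simp
      then obtain t where t: "t \<in> {0<..<d}" "t \<notin> {t. poly P t = 0}"
        using fin by (metis (no_types, lifting) finite_subset subsetI)
      have "dist (x + t *\<^sub>R (y - x)) x = t * norm (y - x)" using t by (simp add: dist_norm)
      also have "\<dots> \<le> d * norm (y - x)" using t by (intro mult_right_mono) auto
      also have "\<dots> < e"
      proof -
        have n1: "norm (y - x) + 1 > 0" using norm_ge_zero[of "y - x"] by linarith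
        then have r: "norm (y - x) / (norm (y - x) + 1) < 1" by (simp add: divide_less_eq)
        have "d * norm (y - x) = e * (norm (y - x) / (norm (y - x) + 1))" by (simp add: d_def)
        also have "\<dots> < e * 1" using e r by (intro mult_strict_left_mono) auto
        finally show ?thesis by simp
      qed
      finally show "\<exists>z\<in>{x. g x \<noteq> 0}. dist z x < e"
        using t P[of t] by (intro bexI[of _ "x + t *\<^sub>R (y - x)"]) auto
    qed
    then have "x \<in> closure {x. g x \<noteq> 0}" by (simp add: closure_approachable) }
  then show ?thesis by auto
qed

lemma good_open: "good g \<Longrightarrow> open {x. g x \<noteq> 0}"
  unfolding good_def by (rule open_Collect_neq) (auto intro: continuous_intros)

lemma open_dense_list:
  fixes M :: "'a::real_normed_vector set"
  assumes M: "open M" and gs: "\<forall>g\<in>set gs. good g \<and> (\<exists>y. g y \<noteq> 0)"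
  shows "open (M \<inter> {x. \<forall>g\<in>set gs. g x \<noteq> 0}) \<and> M \<subseteq> closure (M \<inter> {x. \<forall>g\<in>set gs. g x \<noteq> 0})"
  using gs
proof (induction gs)
  case Nil then show ?case using M closure_subset by auto
next
  case (Cons g gs)
  let ?U = "M \<inter> {x. \<forall>g\<in>set gs. g x \<noteq> 0}"
  have IH: "open ?U" "M \<subseteq> closure ?U" using Cons by auto
  have gg: "good g" and "\<exists>y. g y \<noteq> 0" using Cons.prems by auto
  then obtain y where y: "g y \<noteq> 0" by blast
  have G: "open {x. g x \<noteq> 0}" "closure {x. g x \<noteq> 0} = UNIV" using good_open[OF gg] good_dense[OF gg y] by auto
  have eq: "M \<inter> {x. \<forall>g\<in>set (g # gs). g x \<noteq> 0} = ?U \<inter> {x. g x \<noteq> 0}" by auto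
  have "?U \<subseteq> closure (?U \<inter> {x. g x \<noteq> 0})"
    using open_Int_closure_subset[OF IH(1), of "{x. g x \<noteq> 0}"] G by simp
  then have "closure ?U \<subseteq> closure (?U \<inter> {x. g x \<noteq> 0})"
    by (rule closure_minimal) auto
  then show ?case unfolding eq using IH G by auto
qed

lemma funct_indep_intro:
  assumes M: "open M"
    and gs: "\<forall>g\<in>set gs. good g \<and> (\<exists>y. g y \<noteq> 0)"
    and ind: "\<And>x. x \<in> M \<Longrightarrow> (\<forall>g\<in>set gs. g x \<noteq> 0) \<Longrightarrow> differentials_indep fs x"
  shows "funct_indep M fs"
  unfolding funct_indep_def
  using open_dense_list[OF M gs] ind
  by (intro exI[of _ "M \<inter> {x. \<forall>g\<in>set gs. g x \<noteq> 0}"]) auto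

lemma open_phase_space: "open (phase_space lam :: 'n::{finite,linorder} phase set)"
proof -
  have "good (\<lambda>x::'n phase. 1 + lam * qsq x)" by (intro good_add good_mult good_const good_qsq)
  from good_open[OF this] show ?thesis by (simp add: phase_space_def)
qed


definition Phi :: "nat set \<Rightarrow> nat \<Rightarrow> nat \<Rightarrow> 'n::{finite,linorder} phase \<Rightarrow> real" where
  "Phi A k l x = PA A x * qc x k * qc x l + QA A x * pc x k * pc x l - SA A x * (pc x k * qc x l + qc x k * pc x l)"

lemma sum_two_delta: "finite A \<Longrightarrow>
  (\<Sum>i\<in>A. (if i = k then a else 0) + (if i = l then b else (0::real))) = (if k \<in> A then a else 0) + (if l \<in> A then b else 0)"
  by (simp add: sum.distrib sum.delta')

context fixes x :: "'n::{finite,linorder} phase" begin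

lemma fd_CA: assumes A: "A \<subseteq> {1..CARD('n)}"
  shows "frechet_derivative (CA A) (at x) (VV u w) =
    (\<Sum>i\<in>A. 2 * (PA A x * qc x i - SA A x * pc x i) * u i + 2 * (QA A x * pc x i - SA A x * qc x i) * w i)"
proof -
  have "frechet_derivative (CA A) (at x) (VV u w) = (\<Sum>i=1..CARD('n). if i \<in> A then
     2 * (PA A x * qc x i - SA A x * pc x i) * u i + 2 * (QA A x * pc x i - SA A x * qc x i) * w i else 0)"
    unfolding grad_fd_VV[OF grad_CA[OF A]] by (rule sum.cong) auto
  also have "\<dots> = (\<Sum>i\<in>A. 2 * (PA A x * qc x i - SA A x * pc x i) * u i + 2 * (QA A x * pc x i - SA A x * qc x i) * w i)"
    by (rule sum_if_subset[OF A finite_atLeastAtMost])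
  finally show ?thesis .
qed

lemma fd_CA_qp: assumes A: "A \<subseteq> {1..CARD('n)}"
  shows "frechet_derivative (CA A) (at x) (VV (qc x) (\<lambda>i. - pc x i)) = 0"
proof -
  have "frechet_derivative (CA A) (at x) (VV (qc x) (\<lambda>i. - pc x i)) =
    (\<Sum>i\<in>A. 0 * (qc x i * pc x i) + (- 2 * QA A x) * (pc x i)^2 + (2 * PA A x) * (qc x i)^2)"
    unfolding fd_CA[OF A] by (rule sum.cong) (auto simp: algebra_simps power2_eq_square)
  also have "\<dots> = 0" unfolding sum_lin3 by (simp add: QA_def PA_def)
  finally show ?thesis .
qed

lemma fd_CA_0q: assumes A: "A \<subseteq> {1..CARD('n)}"
  shows "frechet_derivative (CA A) (at x) (VV (\<lambda>i. 0) (qc x)) = 0"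
proof -
  have "frechet_derivative (CA A) (at x) (VV (\<lambda>i. 0) (qc x)) =
    (\<Sum>i\<in>A. (2 * QA A x) * (qc x i * pc x i) + 0 * (pc x i)^2 + (- 2 * SA A x) * (qc x i)^2)"
    unfolding fd_CA[OF A] by (rule sum.cong) (auto simp: algebra_simps power2_eq_square)
  also have "\<dots> = 0" unfolding sum_lin3 by (simp add: QA_def SA_def)
  finally show ?thesis .
qed

lemma fd_CA_Ep: assumes A: "A \<subseteq> {1..CARD('n)}"
  shows "frechet_derivative (CA A) (at x) (VV (\<lambda>i. 0) (\<lambda>i. if i = j then 1 else 0)) =
    (if j \<in> A then 2 * (QA A x * pc x j - SA A x * qc x j) else 0)"
  unfolding fd_CA[OF A] using A by (simp add: finite_subset)

lemma fd_CA_Rot: assumes A: "A \<subseteq> {1..CARD('n)}" and kl: "k \<noteq> l"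
  shows "frechet_derivative (CA A) (at x)
     (VV (\<lambda>i. if i = k then qc x l else if i = l then - qc x k else 0)
         (\<lambda>i. if i = k then pc x l else if i = l then - pc x k else 0)) =
    (if k \<in> A then 2 * Phi A k l x else 0) - (if l \<in> A then 2 * Phi A k l x else 0)"
proof -
  have f: "finite A" using A finite_subset by blast
  have "frechet_derivative (CA A) (at x)
     (VV (\<lambda>i. if i = k then qc x l else if i = l then - qc x k else 0)
         (\<lambda>i. if i = k then pc x l else if i = l then - pc x k else 0)) =
     (\<Sum>i\<in>A. (if i = k then 2 * Phi A k l x else 0) + (if i = l then - 2 * Phi A k l x else 0))"
    unfolding fd_CA[OF A] by (rule sum.cong) (use kl in \<open>auto simp: Phi_def algebra_simps\<close>)
  also have "\<dots> = (if k \<in> A then 2 * Phi A k l x else 0) + (if l \<in> A then - 2 * Phi A k l x else 0)"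
    by (rule sum_two_delta[OF f])
  finally show ?thesis by simp
qed

lemma fd_Ham:
  fixes lam \<omega> :: real
  assumes nz: "1 + lam * qsq x \<noteq> 0"
  shows "frechet_derivative (Ham lam \<omega>) (at x) (VV u w) =
    (\<Sum>i=1..CARD('n). ((\<omega>^2 - lam * psq x) / (1 + lam * qsq x)^2) * qc x i * u i + pc x i / (1 + lam * qsq x) * w i)"
  unfolding grad_fd_VV[OF grad_Ham[OF nz]] by simp

lemma fd_Ham_qp:
  fixes lam \<omega> :: real
  assumes nz: "1 + lam * qsq x \<noteq> 0"
  shows "frechet_derivative (Ham lam \<omega>) (at x) (VV (qc x) (\<lambda>i. - pc x i)) =
    ((\<omega>^2 - lam * psq x) / (1 + lam * qsq x)^2) * qsq x - psq x / (1 + lam * qsq x)"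
proof -
  define D where "D = 1 + lam * qsq x"
  define \<alpha> where "\<alpha> = (\<omega>^2 - lam * psq x) / D^2"
  have "frechet_derivative (Ham lam \<omega>) (at x) (VV (qc x) (\<lambda>i. - pc x i)) =
     (\<Sum>i=1..CARD('n). 0 * (qc x i * pc x i) + (- 1 / D) * (pc x i)^2 + \<alpha> * (qc x i)^2)"
    unfolding fd_Ham[OF nz] D_def[symmetric] \<alpha>_def[symmetric]
    by (rule sum.cong) (auto simp: power2_eq_square)
  also have "\<dots> = \<alpha> * qsq x - psq x / D" unfolding sum_lin3 qsq_def psq_def by simp
  finally show ?thesis by (simp add: \<alpha>_def D_def)
qed

lemma fd_Ham_0q:
  fixes lam \<omega> :: real
  assumes nz: "1 + lam * qsq x \<noteq> 0"
  shows "frechet_derivative (Ham lam \<omega>) (at x) (VV (\<lambda>i. 0) (qc x)) =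
    SA {1..CARD('n)} x / (1 + lam * qsq x)"
  unfolding fd_Ham[OF nz] SA_def
  by (simp add: sum_divide_distrib algebra_simps)

lemma fd_Frad:
  fixes lam \<omega> :: real
  assumes nz: "1 + lam * qsq x \<noteq> 0" and i: "i \<in> {1..CARD('n)}"
  shows "frechet_derivative (Frad lam \<omega> i i) (at x) (VV u w) =
    (\<Sum>k=1..CARD('n). (- (2 * lam * ((\<omega>^2 - lam * psq x) / (1 + lam * qsq x)^2) * qc x k) * (qc x i)^2) * u k
       + (- 2 * lam * (pc x k / (1 + lam * qsq x)) * (qc x i)^2) * w k)
     + (- 2 * Kf lam \<omega> x * qc x i * u i + 2 * pc x i * w i)"
proof -
  have "frechet_derivative (Frad lam \<omega> i i) (at x) (VV u w) =
    (\<Sum>k=1..CARD('n). ((- (2 * lam * ((\<omega>^2 - lam * psq x) / (1 + lam * qsq x)^2) * qc x k) * (qc x i)^2) * u k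
       + (- 2 * lam * (pc x k / (1 + lam * qsq x)) * (qc x i)^2) * w k)
     + ((if k = i then - 2 * Kf lam \<omega> x * qc x i * u i + 2 * pc x i * w i else 0)))"
    unfolding grad_fd_VV[OF grad_Frad[OF nz i i]]
    by (rule sum.cong) (auto simp: algebra_simps power2_eq_square)
  also have "\<dots> = (\<Sum>k=1..CARD('n). (- (2 * lam * ((\<omega>^2 - lam * psq x) / (1 + lam * qsq x)^2) * qc x k) * (qc x i)^2) * u k
       + (- 2 * lam * (pc x k / (1 + lam * qsq x)) * (qc x i)^2) * w k)
     + (- 2 * Kf lam \<omega> x * qc x i * u i + 2 * pc x i * w i)" using i by (simp add: sum.distrib)
  finally show ?thesis .
qed

end


declare upt_Suc[simp del]

lemma triangular:
  fixes c :: "nat \<Rightarrow> real"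
  assumes eq: "\<And>j. j < n \<Longrightarrow> (\<Sum>k<n. c k * e j k) = 0"
    and low: "\<And>j k. j < n \<Longrightarrow> k < j \<Longrightarrow> e j k = 0"
    and diag: "\<And>j. j < n \<Longrightarrow> e j j \<noteq> 0"
  shows "k < n \<Longrightarrow> c k = 0"
proof (induction k rule: measure_induct_rule[of "\<lambda>k. n - k"])
  case (less j)
  have "(\<Sum>k<n. c k * e j k) = c j * e j j + (\<Sum>k\<in>{..<n} - {j}. c k * e j k)"
    using less.prems by (simp add: sum.remove)
  also have "(\<Sum>k\<in>{..<n} - {j}. c k * e j k) = 0"
  proof (rule sum.neutral, rule ballI)
    fix k assume k: "k \<in> {..<n} - {j}"
    show "c k * e j k = 0"
    proof (cases "k < j")
      case True then show ?thesis using low[OF less.prems] by simp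
    next
      case False then have "j < k" using k by auto
      then have "c k = 0" using less.IH[of k] k by auto
      then show ?thesis by simp
    qed
  qed
  finally have "c j * e j j = 0" using eq[OF less.prems] by simp
  then show ?case using diag[OF less.prems] by simp
qed

lemma sum_lessThan_add: "(\<Sum>i<m+n. f i) = (\<Sum>i<m. f i) + (\<Sum>i<n. f (m + i :: nat))"
  by (induction n) (simp_all add: add.assoc)

lemma sum_idx_cons: "(\<Sum>k<length (g # gs). c k * D ((g # gs) ! k)) =
    c 0 * D g + (\<Sum>k<length gs. c (Suc k) * D (gs ! k))"
  by (subst length_Cons, subst sum.lessThan_Suc_shift) simp

lemma sum_idx_append: "(\<Sum>k<length (xs @ ys). c k * D ((xs @ ys) ! k)) =
    (\<Sum>k<length xs. c k * D (xs ! k)) + (\<Sum>k<length ys. c (length xs + k) * D (ys ! k))"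
  by (simp add: sum_lessThan_add nth_append)

definition gH :: "real \<Rightarrow> real \<Rightarrow> 'n::{finite,linorder} phase \<Rightarrow> real" where
  "gH lam \<omega> x = \<omega>^2 * qsq x - psq x - 2 * lam * psq x * qsq x"

definition gU :: "nat \<Rightarrow> 'n::{finite,linorder} phase \<Rightarrow> real" where
  "gU m x = QA {0<..m} x * pc x m - SA {0<..m} x * qc x m"

definition gD :: "nat \<Rightarrow> 'n::{finite,linorder} phase \<Rightarrow> real" where
  "gD m x = QA {CARD('n) - m<..CARD('n)} x * pc x (CARD('n) - m + 1) - SA {CARD('n) - m<..CARD('n)} x * qc x (CARD('n) - m + 1)"

lemma fd_Ham_qp_gH:
  fixes lam \<omega> :: real and x :: "'n::{finite,linorder} phase"
  assumes nz: "1 + lam * qsq x \<noteq> 0"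
  shows "frechet_derivative (Ham lam \<omega>) (at x) (VV (qc x) (\<lambda>i. - pc x i)) = gH lam \<omega> x / (1 + lam * qsq x)^2"
proof -
  define D where "D = 1 + lam * qsq x"
  have D: "D \<noteq> 0" using nz D_def by simp
  have "((\<omega>^2 - lam * psq x) / D^2) * qsq x - psq x / D = gH lam \<omega> x / D^2"
    unfolding gH_def using D by (simp add: field_simps power2_eq_square) (simp add: D_def algebra_simps)
  then show ?thesis unfolding fd_Ham_qp[OF nz] D_def .
qed

lemma CA_diff: "A \<subseteq> {1..CARD('n)} \<Longrightarrow> CA A differentiable (at (x :: 'n::{finite,linorder} phase))"
  by (rule grad_differentiable[OF grad_CA])

lemma Cup_sub: "m \<le> CARD('n::{finite,linorder}) \<Longrightarrow> {0<..m} \<subseteq> {1..CARD('n)}" by auto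
lemma Cdown_sub: "{CARD('n::{finite,linorder}) - m<..CARD('n)} \<subseteq> {1..CARD('n)}" by auto

lemma indep_Cup:
  fixes lam \<omega> :: real and x :: "'n::{finite,linorder} phase"
  assumes nz: "1 + lam * qsq x \<noteq> 0" and gh: "gH lam \<omega> x \<noteq> 0"
    and gu: "\<And>m. m \<in> {2..CARD('n)} \<Longrightarrow> gU m x \<noteq> 0"
  shows "differentials_indep (Ham lam \<omega> # map Cup [2..<CARD('n)+1]) x"
proof -
  let ?N = "CARD('n)"
  let ?fs = "map Cup [2..<?N+1] :: ('n phase \<Rightarrow> real) list"
  have len: "length ?fs = ?N - 1" by simp
  have nth: "k < ?N - 1 \<Longrightarrow> ?fs ! k = CA {0<..k+2}" for k by (simp add: Cup_CA nth_upt)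
  have sub: "m \<le> ?N \<Longrightarrow> {0<..m} \<subseteq> {1..?N}" for m by auto
  have diffs: "\<forall>k<length (Ham lam \<omega> # ?fs). ((Ham lam \<omega> # ?fs) ! k) differentiable (at x)"
  proof (intro allI impI)
    fix k assume k: "k < length (Ham lam \<omega> # ?fs)"
    show "((Ham lam \<omega> # ?fs) ! k) differentiable (at x)"
    proof (cases k)
      case 0 then show ?thesis using grad_differentiable[OF grad_Ham[OF nz]] by simp
    next
      case (Suc k') then show ?thesis using k nth[of k'] CA_diff[OF sub[of "k'+2"]] len by simp
    qed
  qed
  show ?thesis unfolding differentials_indep_def
  proof (intro conjI diffs allI impI)
    fix c :: "nat \<Rightarrow> real" and k
    assume h: "\<forall>v. (\<Sum>k<length (Ham lam \<omega> # ?fs). c k * frechet_derivative ((Ham lam \<omega> # ?fs) ! k) (at x) v) = 0"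
    assume k: "k < length (Ham lam \<omega> # ?fs)"
    have E: "c 0 * frechet_derivative (Ham lam \<omega>) (at x) v +
       (\<Sum>k<?N - 1. c (Suc k) * frechet_derivative (CA {0<..k+2}) (at x) v) = 0" for v
      using h[rule_format, of v] unfolding sum_idx_cons[where D="\<lambda>f. frechet_derivative f (at x) v"] len
      by (simp add: nth Cup_CA)
    have c0: "c 0 = 0"
    proof -
      have "(\<Sum>k<?N - 1. c (Suc k) * frechet_derivative (CA {0<..k+2}) (at x) (VV (qc x) (\<lambda>i. - pc x i))) = 0"
        by (rule sum.neutral) (auto simp: fd_CA_qp[OF sub])
      then have "c 0 * (gH lam \<omega> x / (1 + lam * qsq x)^2) = 0"
        using E[of "VV (qc x) (\<lambda>i. - pc x i)"] by (simp add: fd_Ham_qp_gH[OF nz])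
      then show ?thesis using gh nz by simp
    qed
    have cs: "c (Suc k) = 0" if "k < ?N - 1" for k
    proof (rule triangular[of "?N - 1" "\<lambda>k. c (Suc k)"
          "\<lambda>j k. frechet_derivative (CA {0<..k+2}) (at x) (VV (\<lambda>i. 0) (\<lambda>i. if i = j + 2 then 1 else 0))"])
      fix j assume "j < ?N - 1"
      show "(\<Sum>k<?N - 1. c (Suc k) * frechet_derivative (CA {0<..k+2}) (at x) (VV (\<lambda>i. 0) (\<lambda>i. if i = j + 2 then 1 else 0))) = 0"
        using E[of "VV (\<lambda>i. 0) (\<lambda>i. if i = j + 2 then 1 else 0)"] c0 by simp
    next
      fix j k assume "j < ?N - 1" "k < j"
      then show "frechet_derivative (CA {0<..k+2}) (at x) (VV (\<lambda>i. 0) (\<lambda>i. if i = j + 2 then 1 else 0)) = 0"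
        by (simp add: fd_CA_Ep[OF sub])
    next
      fix j assume j: "j < ?N - 1"
      have "gU (j+2) x \<noteq> 0" using gu[of "j+2"] j by simp
      then show "frechet_derivative (CA {0<..j+2}) (at x) (VV (\<lambda>i. 0) (\<lambda>i. if i = j + 2 then 1 else 0)) \<noteq> 0"
        using j by (simp add: fd_CA_Ep[OF sub] gU_def)
    qed (use that in simp)
    show "c k = 0"
    proof (cases k)
      case 0 then show ?thesis using c0 by simp
    next
      case (Suc k') then show ?thesis using cs[of k'] k by simp
    qed
  qed
qed


lemma indep_Cdown:
  fixes lam \<omega> :: real and x :: "'n::{finite,linorder} phase"
  assumes nz: "1 + lam * qsq x \<noteq> 0" and gh: "gH lam \<omega> x \<noteq> 0"
    and gd: "\<And>m. m \<in> {2..CARD('n)} \<Longrightarrow> gD m x \<noteq> 0"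
  shows "differentials_indep (Ham lam \<omega> # map Cdown [2..<CARD('n)+1]) x"
proof -
  let ?N = "CARD('n)"
  let ?fs = "map Cdown [2..<?N+1] :: ('n phase \<Rightarrow> real) list"
  have len: "length ?fs = ?N - 1" by simp
  have nth: "k < ?N - 1 \<Longrightarrow> ?fs ! k = CA {?N - (k+2)<..?N}" for k by (simp add: Cdown_CA nth_upt)
  have sub: "{?N - m<..?N} \<subseteq> {1..?N}" for m by auto
  have diffs: "\<forall>k<length (Ham lam \<omega> # ?fs). ((Ham lam \<omega> # ?fs) ! k) differentiable (at x)"
  proof (intro allI impI)
    fix k assume k: "k < length (Ham lam \<omega> # ?fs)"
    show "((Ham lam \<omega> # ?fs) ! k) differentiable (at x)"
    proof (cases k)
      case 0 then show ?thesis using grad_differentiable[OF grad_Ham[OF nz]] by simp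
    next
      case (Suc k') then show ?thesis using k nth[of k'] CA_diff[OF sub] len by simp
    qed
  qed
  show ?thesis unfolding differentials_indep_def
  proof (intro conjI diffs allI impI)
    fix c :: "nat \<Rightarrow> real" and k
    assume h: "\<forall>v. (\<Sum>k<length (Ham lam \<omega> # ?fs). c k * frechet_derivative ((Ham lam \<omega> # ?fs) ! k) (at x) v) = 0"
    assume k: "k < length (Ham lam \<omega> # ?fs)"
    have E: "c 0 * frechet_derivative (Ham lam \<omega>) (at x) v +
       (\<Sum>k<?N - 1. c (Suc k) * frechet_derivative (CA {?N - (k+2)<..?N}) (at x) v) = 0" for v
      using h[rule_format, of v] unfolding sum_idx_cons[where D="\<lambda>f. frechet_derivative f (at x) v"] len
      by (simp add: nth Cdown_CA nth_upt)
    have c0: "c 0 = 0"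
    proof -
      have "(\<Sum>k<?N - 1. c (Suc k) * frechet_derivative (CA {?N - (k+2)<..?N}) (at x) (VV (qc x) (\<lambda>i. - pc x i))) = 0"
        by (rule sum.neutral) (auto simp: fd_CA_qp[OF sub])
      then have "c 0 * (gH lam \<omega> x / (1 + lam * qsq x)^2) = 0"
        using E[of "VV (qc x) (\<lambda>i. - pc x i)"] by (simp add: fd_Ham_qp_gH[OF nz])
      then show ?thesis using gh nz by simp
    qed
    have cs: "c (Suc k) = 0" if "k < ?N - 1" for k
    proof (rule triangular[of "?N - 1" "\<lambda>k. c (Suc k)"
          "\<lambda>j k. frechet_derivative (CA {?N - (k+2)<..?N}) (at x) (VV (\<lambda>i. 0) (\<lambda>i. if i = ?N - (j + 2) + 1 then 1 else 0))"])
      fix j assume "j < ?N - 1"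
      show "(\<Sum>k<?N - 1. c (Suc k) * frechet_derivative (CA {?N - (k+2)<..?N}) (at x) (VV (\<lambda>i. 0) (\<lambda>i. if i = ?N - (j + 2) + 1 then 1 else 0))) = 0"
        using E[of "VV (\<lambda>i. 0) (\<lambda>i. if i = ?N - (j + 2) + 1 then 1 else 0)"] c0 by simp
    next
      fix j k assume jk: "j < ?N - 1" "k < j"
      then have "\<not> (?N - (k+2) < ?N - (j + 2) + 1)" by arith
      then show "frechet_derivative (CA {?N - (k+2)<..?N}) (at x) (VV (\<lambda>i. 0) (\<lambda>i. if i = ?N - (j + 2) + 1 then 1 else 0)) = 0"
        by (simp only: fd_CA_Ep[OF sub] greaterThanAtMost_iff) simp
    next
      fix j assume j: "j < ?N - 1"
      have "gD (j+2) x \<noteq> 0" using gd[of "j+2"] j by simp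
      then show "frechet_derivative (CA {?N - (j+2)<..?N}) (at x) (VV (\<lambda>i. 0) (\<lambda>i. if i = ?N - (j + 2) + 1 then 1 else 0)) \<noteq> 0"
        using j by (simp add: fd_CA_Ep[OF sub] gD_def)
    qed (use that in simp)
    show "c k = 0"
    proof (cases k)
      case 0 then show ?thesis using c0 by simp
    next
      case (Suc k') then show ?thesis using cs[of k'] k by simp
    qed
  qed
qed

lemma fd_Frad_Ep:
  fixes lam \<omega> :: real and x :: "'n::{finite,linorder} phase"
  assumes nz: "1 + lam * qsq x \<noteq> 0" and i: "i \<in> {1..CARD('n)}" and j: "j \<in> {1..CARD('n)}"
  shows "frechet_derivative (Frad lam \<omega> i i) (at x) (VV (\<lambda>i. 0) (\<lambda>i. if i = j then 1 else 0)) =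
     - 2 * lam * (pc x j / (1 + lam * qsq x)) * (qc x i)^2 + (if j = i then 2 * pc x i else 0)"
proof -
  have "(\<Sum>k=1..CARD('n). (- (2 * lam * ((\<omega>^2 - lam * psq x) / (1 + lam * qsq x)^2) * qc x k) * (qc x i)^2) * 0
       + (- 2 * lam * (pc x k / (1 + lam * qsq x)) * (qc x i)^2) * (if k = j then 1 else 0))
     = (\<Sum>k=1..CARD('n). if k = j then - 2 * lam * (pc x j / (1 + lam * qsq x)) * (qc x i)^2 else 0)"
    by (rule sum.cong) auto
  also have "\<dots> = - 2 * lam * (pc x j / (1 + lam * qsq x)) * (qc x i)^2" using j by (simp add: sum.delta')
  finally show ?thesis unfolding fd_Frad[OF nz i] using j by simp
qed

lemma indep_Frad:
  fixes lam \<omega> :: real and x :: "'n::{finite,linorder} phase"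
  assumes nz: "1 + lam * qsq x \<noteq> 0"
    and gp: "\<And>j. j \<in> {1..CARD('n)} \<Longrightarrow> pc x j \<noteq> 0"
  shows "differentials_indep (map (\<lambda>i. Frad lam \<omega> i i) [1..<CARD('n)+1]) x"
proof -
  let ?N = "CARD('n)"
  let ?fs = "map (\<lambda>i. Frad lam \<omega> i i) [1..<?N+1] :: ('n phase \<Rightarrow> real) list"
  define D where "D = 1 + lam * qsq x"
  have D: "D \<noteq> 0" using nz D_def by simp
  have len: "length ?fs = ?N" by simp
  have nth: "k < ?N \<Longrightarrow> ?fs ! k = Frad lam \<omega> (k+1) (k+1)" for k by (simp add: nth_upt)
  have diffs: "\<forall>k<length ?fs. (?fs ! k) differentiable (at x)"
    using grad_differentiable[OF grad_Frad[OF nz]] by (auto simp: nth)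
  show ?thesis unfolding differentials_indep_def
  proof (intro conjI diffs allI impI)
    fix c :: "nat \<Rightarrow> real" and k
    assume h: "\<forall>v. (\<Sum>k<length ?fs. c k * frechet_derivative (?fs ! k) (at x) v) = 0"
    assume k: "k < length ?fs"
    define s where "s = (\<Sum>k<?N. c k * (qc x (k+1))^2)"
    have cj: "c (j - 1) = lam * s / D" if j: "j \<in> {1..?N}" for j
    proof -
      have "(\<Sum>k<?N. c k * frechet_derivative (Frad lam \<omega> (k+1) (k+1)) (at x) (VV (\<lambda>i. 0) (\<lambda>i. if i = j then 1 else 0))) = 0"
        using h[rule_format, of "VV (\<lambda>i. 0) (\<lambda>i. if i = j then 1 else 0)"] by (simp add: nth)
      moreover have "(\<Sum>k<?N. c k * frechet_derivative (Frad lam \<omega> (k+1) (k+1)) (at x) (VV (\<lambda>i. 0) (\<lambda>i. if i = j then 1 else 0)))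
        = (\<Sum>k<?N. (- 2 * lam * (pc x j / D)) * (c k * (qc x (k+1))^2) + (if k = j - 1 then 2 * c k * pc x (k+1) else 0))"
      proof (rule sum.cong[OF refl])
        fix k assume "k \<in> {..<?N}"
        then have kk: "k + 1 \<in> {1..?N}" by auto
        have "(j = k + 1) = (k = j - 1)" using j by auto
        then show "c k * frechet_derivative (Frad lam \<omega> (k+1) (k+1)) (at x) (VV (\<lambda>i. 0) (\<lambda>i. if i = j then 1 else 0))
          = (- 2 * lam * (pc x j / D)) * (c k * (qc x (k+1))^2) + (if k = j - 1 then 2 * c k * pc x (k+1) else 0)"
          unfolding fd_Frad_Ep[OF nz kk j] D_def by (simp add: algebra_simps)
      qed
      ultimately have z: "(\<Sum>k<?N. (- 2 * lam * (pc x j / D)) * (c k * (qc x (k+1))^2) + (if k = j - 1 then 2 * c k * pc x (k+1) else 0)) = 0"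
        by simp
      have "(\<Sum>k<?N. (- 2 * lam * (pc x j / D)) * (c k * (qc x (k+1))^2) + (if k = j - 1 then 2 * c k * pc x (k+1) else 0))
        = (- 2 * lam * (pc x j / D)) * s + (\<Sum>k<?N. if k = j - 1 then 2 * c k * pc x (k+1) else 0)"
        by (simp only: sum.distrib sum_distrib_left s_def)
      also have "(\<Sum>k<?N. if k = j - 1 then 2 * c k * pc x (k+1) else 0) = 2 * c (j - 1) * pc x j"
      proof -
        have "j - 1 < ?N" using j by auto
        then show ?thesis using j by (simp add: sum.delta')
      qed
      finally have "(- 2 * lam * (pc x j / D)) * s + 2 * c (j - 1) * pc x j = 0" using z by simp
      then have "pc x j * (2 * c (j - 1) - 2 * lam * s / D) = 0" by (simp add: algebra_simps)
      then show ?thesis using gp[OF j] by simp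
    qed
    define \<gamma> where "\<gamma> = lam * s / D"
    have ck: "c k = \<gamma>" if "k < ?N" for k using cj[of "k+1"] that by (simp add: \<gamma>_def)
    have ri: "(\<Sum>k<?N. (qc x (k+1))^2) = (\<Sum>i=1..?N. (qc x i)^2)"
      by (rule sum.reindex_bij_witness[of _ "\<lambda>i. i - 1" "\<lambda>k. k+1"]) auto
    have "s = (\<Sum>k<?N. \<gamma> * (qc x (k+1))^2)" unfolding s_def by (rule sum.cong) (auto simp: ck)
    also have "\<dots> = \<gamma> * qsq x" unfolding qsq_def sum_distrib_left[symmetric] ri ..
    finally have "s = \<gamma> * qsq x" .
    note sg = this
    have e1: "\<gamma> = lam * s / D" by (simp add: \<gamma>_def)
    have e2: "\<gamma> = lam * (\<gamma> * qsq x) / D" using e1 unfolding sg .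
    then have "\<gamma> * D = lam * \<gamma> * qsq x" using D by (simp add: field_simps)
    then have "\<gamma> = 0" by (simp add: D_def algebra_simps)
    then show "c k = 0" using ck k by simp
  qed
qed


lemma sum_single: "finite S \<Longrightarrow> a \<in> S \<Longrightarrow> (\<And>m. m \<in> S \<Longrightarrow> m \<noteq> a \<Longrightarrow> f m = 0) \<Longrightarrow> sum f S = (f a :: real)"
  by (simp add: sum.remove sum.neutral)

lemma lin2: fixes a1 b1 a2 b2 x y :: real
  assumes "a1 * x + b1 * y = 0" "a2 * x + b2 * y = 0" "a1 * b2 - a2 * b1 \<noteq> 0"
  shows "x = 0 \<and> y = 0"
proof -
  have "x * (a1 * b2 - a2 * b1) = b2 * (a1 * x + b1 * y) - b1 * (a2 * x + b2 * y)" by (simp add: algebra_simps)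
  then have x: "x * (a1 * b2 - a2 * b1) = 0" using assms by simp
  have "y * (a1 * b2 - a2 * b1) = a1 * (a2 * x + b2 * y) - a2 * (a1 * x + b1 * y)" by (simp add: algebra_simps)
  then have y: "y * (a1 * b2 - a2 * b1) = 0" using assms by simp
  show ?thesis using x y assms(3) by simp
qed

definition gI :: "real \<Rightarrow> real \<Rightarrow> nat \<Rightarrow> 'n::{finite,linorder} phase \<Rightarrow> real" where
  "gI lam \<omega> i x = (let Q = qsq x; P = psq x; S = SA {1..CARD('n)} x; D = 1 + lam * Q; qi = qc x i; pi = pc x i in
     S * (- 2 * lam * (\<omega>^2 - lam * P) * Q * qi^2 - 2 * D * (lam * P - \<omega>^2) * qi^2 - 2 * D^2 * pi^2 + 2 * lam * D * P * qi^2)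
     - ((\<omega>^2 - lam * P) * Q - P * D) * (2 * D * pi * qi - 2 * lam * qi^2 * S))"

context fixes x :: "'n::{finite,linorder} phase" begin

lemma fd_Frad_0q:
  fixes lam \<omega> :: real
  assumes nz: "1 + lam * qsq x \<noteq> 0" and i: "i \<in> {1..CARD('n)}"
  shows "frechet_derivative (Frad lam \<omega> i i) (at x) (VV (\<lambda>i. 0) (qc x)) =
    - 2 * lam * (qc x i)^2 * SA {1..CARD('n)} x / (1 + lam * qsq x) + 2 * pc x i * qc x i"
proof -
  define D where "D = 1 + lam * qsq x"
  have "(\<Sum>k=1..CARD('n). (- (2 * lam * ((\<omega>^2 - lam * psq x) / D^2) * qc x k) * (qc x i)^2) * 0
       + (- 2 * lam * (pc x k / D) * (qc x i)^2) * qc x k)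
     = (\<Sum>k=1..CARD('n). (- 2 * lam * (qc x i)^2 / D) * (qc x k * pc x k))"
    by (rule sum.cong) (auto simp: algebra_simps)
  also have "\<dots> = - 2 * lam * (qc x i)^2 * SA {1..CARD('n)} x / D"
    unfolding SA_def sum_distrib_left[symmetric] by simp
  finally show ?thesis unfolding fd_Frad[OF nz i] D_def[symmetric] using i by simp
qed

lemma fd_Frad_qp:
  fixes lam \<omega> :: real
  assumes nz: "1 + lam * qsq x \<noteq> 0" and i: "i \<in> {1..CARD('n)}"
  shows "frechet_derivative (Frad lam \<omega> i i) (at x) (VV (qc x) (\<lambda>i. - pc x i)) =
    - 2 * lam * ((\<omega>^2 - lam * psq x) / (1 + lam * qsq x)^2) * qsq x * (qc x i)^2
    + 2 * lam * psq x * (qc x i)^2 / (1 + lam * qsq x) - 2 * Kf lam \<omega> x * (qc x i)^2 - 2 * (pc x i)^2"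
proof -
  define D where "D = 1 + lam * qsq x"
  define \<alpha> where "\<alpha> = (\<omega>^2 - lam * psq x) / D^2"
  have "(\<Sum>k=1..CARD('n). (- (2 * lam * \<alpha> * qc x k) * (qc x i)^2) * qc x k
       + (- 2 * lam * (pc x k / D) * (qc x i)^2) * (- pc x k))
     = (\<Sum>k=1..CARD('n). 0 * (qc x k * pc x k) + (2 * lam * (qc x i)^2 / D) * (pc x k)^2 + (- 2 * lam * \<alpha> * (qc x i)^2) * (qc x k)^2)"
    by (rule sum.cong) (auto simp: algebra_simps power2_eq_square)
  also have "\<dots> = (2 * lam * (qc x i)^2 / D) * psq x + (- 2 * lam * \<alpha> * (qc x i)^2) * qsq x"
    unfolding sum_lin3 psq_def qsq_def by simp
  finally show ?thesis unfolding fd_Frad[OF nz i] D_def[symmetric] \<alpha>_def[symmetric] using i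
    by (simp add: algebra_simps power2_eq_square)
qed

lemma det_gI:
  fixes lam \<omega> :: real
  assumes nz: "1 + lam * qsq x \<noteq> 0" and i: "i \<in> {1..CARD('n)}"
  shows "frechet_derivative (Ham lam \<omega>) (at x) (VV (\<lambda>i. 0) (qc x)) * frechet_derivative (Frad lam \<omega> i i) (at x) (VV (qc x) (\<lambda>i. - pc x i))
       - frechet_derivative (Ham lam \<omega>) (at x) (VV (qc x) (\<lambda>i. - pc x i)) * frechet_derivative (Frad lam \<omega> i i) (at x) (VV (\<lambda>i. 0) (qc x))
       = gI lam \<omega> i x / (1 + lam * qsq x)^3"
proof -
  define D where "D = 1 + lam * qsq x"
  have D: "D \<noteq> 0" using nz D_def by simp
  have KD: "Kf lam \<omega> x * D = lam * psq x - \<omega>^2"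
    unfolding Kf_def Ham_def D_def[symmetric] using D by (simp add: field_simps) (simp add: D_def algebra_simps)
  define K where "K = Kf lam \<omega> x"
  have K: "K = (lam * psq x - \<omega>^2) / D" using KD D by (simp add: K_def field_simps)
  show ?thesis
    unfolding fd_Frad_0q[OF nz i] fd_Frad_qp[OF nz i] fd_Ham_0q[OF nz] fd_Ham_qp[OF nz] gI_def Let_def
      D_def[symmetric] K_def[symmetric] K
    using D by (simp add: field_simps power2_eq_square power3_eq_cube)
qed


definition Rv :: "'n::{finite,linorder} phase \<Rightarrow> nat \<Rightarrow> nat \<Rightarrow> 'n phase" where
  "Rv y k l = VV (\<lambda>i. if i = k then qc y l else if i = l then - qc y k else 0)
                 (\<lambda>i. if i = k then pc y l else if i = l then - pc y k else 0)"

lemma rotU: assumes "1 \<le> k" "k < l" "l \<le> CARD('n)" "m \<le> CARD('n)"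
  shows "frechet_derivative (CA {0<..m}) (at x) (Rv x k l) = (if k \<le> m \<and> m < l then 2 * Phi {0<..m} k l x else 0)"
proof -
  have sub: "{0<..m} \<subseteq> {1..CARD('n)}" using assms by auto
  have kl: "k \<noteq> l" using assms by simp
  show ?thesis unfolding Rv_def fd_CA_Rot[OF sub kl] using assms by auto
qed

lemma rotD: assumes "1 \<le> k" "k < l" "l \<le> CARD('n)"
  shows "frechet_derivative (CA {CARD('n) - m<..CARD('n)}) (at x) (Rv x k l) =
     (if k \<le> CARD('n) - m \<and> CARD('n) - m < l then - 2 * Phi {CARD('n) - m<..CARD('n)} k l x else 0)"
proof -
  have sub: "{CARD('n) - m<..CARD('n)} \<subseteq> {1..CARD('n)}" by auto
  have kl: "k \<noteq> l" using assms by simp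
  show ?thesis unfolding Rv_def fd_CA_Rot[OF sub kl] using assms by auto
qed

end

definition detL :: "nat \<Rightarrow> 'n::{finite,linorder} phase \<Rightarrow> real" where
  "detL L x = Phi {0<..L} 1 (L+1) x * Phi {L<..CARD('n)} L (L+1) x - Phi {0<..L} L (L+1) x * Phi {L<..CARD('n)} 1 (L+1) x"

definition gF :: "'n::{finite,linorder} phase \<Rightarrow> real" where
  "gF x = QA {0<..CARD('n)} x * pc x 1 - SA {0<..CARD('n)} x * qc x 1"

lemma C_part:
  fixes x :: "'n::{finite,linorder} phase" and bU eD :: "nat \<Rightarrow> real"
  defines "N \<equiv> CARD('n)"
  assumes N2: "N \<ge> 2"
    and EC: "\<And>v. (\<Sum>m\<in>{2..N}. bU m * frechet_derivative (CA {0<..m}) (at x) v)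
              + (\<Sum>m\<in>{2..N-1}. eD m * frechet_derivative (CA {N - m<..N}) (at x) v) = 0"
    and g12: "N \<ge> 3 \<Longrightarrow> Phi {1<..N} 1 2 x \<noteq> 0"
    and gL: "\<And>L. 2 \<le> L \<Longrightarrow> L \<le> N - 2 \<Longrightarrow> detL L x \<noteq> 0"
    and gN: "N \<ge> 3 \<Longrightarrow> Phi {0<..N-1} (N-1) N x \<noteq> 0"
    and g1: "gF x \<noteq> 0"
  shows "(\<forall>m\<in>{2..N}. bU m = 0) \<and> (\<forall>m\<in>{2..N-1}. eD m = 0)"
proof -
  have ECR: "(\<Sum>m\<in>{2..N}. bU m * (if k \<le> m \<and> m < l then 2 * Phi {0<..m} k l x else 0))
     + (\<Sum>m\<in>{2..N-1}. eD m * (if k \<le> N - m \<and> N - m < l then - 2 * Phi {N - m<..N} k l x else 0)) = 0"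
    if kl: "1 \<le> k" "k < l" "l \<le> N" for k l
  proof -
    have "(\<Sum>m\<in>{2..N}. bU m * frechet_derivative (CA {0<..m}) (at x) (Rv x k l)) =
          (\<Sum>m\<in>{2..N}. bU m * (if k \<le> m \<and> m < l then 2 * Phi {0<..m} k l x else 0))"
      by (rule sum.cong) (auto simp: rotU[OF kl[unfolded N_def]] N_def)
    moreover have "(\<Sum>m\<in>{2..N-1}. eD m * frechet_derivative (CA {N - m<..N}) (at x) (Rv x k l)) =
          (\<Sum>m\<in>{2..N-1}. eD m * (if k \<le> N - m \<and> N - m < l then - 2 * Phi {N - m<..N} k l x else 0))"
      by (rule sum.cong) (auto simp: rotD[OF kl[unfolded N_def]] N_def)
    ultimately show ?thesis using EC[of "Rv x k l"] by simp
  qed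
  have IND: "2 \<le> L \<Longrightarrow> L \<le> N - 1 \<Longrightarrow> (\<forall>m\<in>{2..L-1}. bU m = 0) \<and> (\<forall>m\<in>{N-L+1..N-1}. 2 \<le> m \<longrightarrow> eD m = 0)" for L
  proof (induction L)
    case 0 then show ?case by simp
  next
    case (Suc L)
    show ?case
    proof (cases "Suc L = 2")
      case True
      show ?thesis
      proof (cases "N \<ge> 3")
        case False
        then show ?thesis using True by auto
      next
        case N3: True
        have E: "(\<Sum>m\<in>{2..N}. bU m * (if 1 \<le> m \<and> m < 2 then 2 * Phi {0<..m} 1 2 x else 0))
          + (\<Sum>m\<in>{2..N-1}. eD m * (if 1 \<le> N - m \<and> N - m < 2 then - 2 * Phi {N - m<..N} 1 2 x else 0)) = 0"
          using ECR[of 1 2] N2 by simp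
        have s1: "(\<Sum>m\<in>{2..N}. bU m * (if 1 \<le> m \<and> m < 2 then 2 * Phi {0<..m} 1 2 x else 0)) = 0"
          by (rule sum.neutral) auto
        have s2: "(\<Sum>m\<in>{2..N-1}. eD m * (if 1 \<le> N - m \<and> N - m < 2 then - 2 * Phi {N - m<..N} 1 2 x else 0))
            = eD (N-1) * (if 1 \<le> N - (N-1) \<and> N - (N-1) < 2 then - 2 * Phi {N - (N-1)<..N} 1 2 x else 0)"
          by (rule sum_single) (use N3 in auto)
        have "N - (N - 1) = 1" using N3 by simp
        then have "eD (N-1) * (- 2 * Phi {1<..N} 1 2 x) = 0" using E s1 s2 by simp
        then have e0: "eD (N-1) = 0" using g12[OF N3] by simp
        have mm: "m = N - 1" if "m \<in> {N-Suc L+1..N-1}" for m using that True N3 by auto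
        show ?thesis
        proof (intro conjI ballI impI)
          fix m assume "m \<in> {2..Suc L - 1}" then show "bU m = 0" using True by auto
        next
          fix m assume "m \<in> {N - Suc L + 1..N - 1}" "2 \<le> m"
          then show "eD m = 0" using mm e0 by metis
        qed
      qed
    next
      case False
      then have L2: "2 \<le> L" and LN: "L + 1 \<le> N - 1" using Suc.prems by auto
      have LN1: "L \<le> N - 1" using LN by arith
      have LN2: "L \<le> N - 2" using LN by arith
      from Suc.IH[OF L2 LN1] have IH: "\<forall>m\<in>{2..L-1}. bU m = 0" "\<forall>m\<in>{N-L+1..N-1}. 2 \<le> m \<longrightarrow> eD m = 0" by auto
      have NL: "N - (N - L) = L" using LN by simp
      have E1: "(\<Sum>m\<in>{2..N}. bU m * (if 1 \<le> m \<and> m < L+1 then 2 * Phi {0<..m} 1 (L+1) x else 0))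
          + (\<Sum>m\<in>{2..N-1}. eD m * (if 1 \<le> N - m \<and> N - m < L+1 then - 2 * Phi {N - m<..N} 1 (L+1) x else 0)) = 0"
        using ECR[of 1 "L+1"] L2 LN by simp
      have E2: "(\<Sum>m\<in>{2..N}. bU m * (if L \<le> m \<and> m < L+1 then 2 * Phi {0<..m} L (L+1) x else 0))
          + (\<Sum>m\<in>{2..N-1}. eD m * (if L \<le> N - m \<and> N - m < L+1 then - 2 * Phi {N - m<..N} L (L+1) x else 0)) = 0"
        using ECR[of L "L+1"] L2 LN by simp
      have u1: "(\<Sum>m\<in>{2..N}. bU m * (if 1 \<le> m \<and> m < L+1 then 2 * Phi {0<..m} 1 (L+1) x else 0))
          = bU L * (2 * Phi {0<..L} 1 (L+1) x)"
        by (subst sum_single[where a=L]) (use L2 LN IH in auto)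
      have d1: "(\<Sum>m\<in>{2..N-1}. eD m * (if 1 \<le> N - m \<and> N - m < L+1 then - 2 * Phi {N - m<..N} 1 (L+1) x else 0))
          = eD (N-L) * (- 2 * Phi {L<..N} 1 (L+1) x)"
        by (subst sum_single[where a="N-L"]) (use L2 LN IH NL in auto)
      have u2: "(\<Sum>m\<in>{2..N}. bU m * (if L \<le> m \<and> m < L+1 then 2 * Phi {0<..m} L (L+1) x else 0))
          = bU L * (2 * Phi {0<..L} L (L+1) x)"
        by (subst sum_single[where a=L]) (use L2 LN in auto)
      have d2: "(\<Sum>m\<in>{2..N-1}. eD m * (if L \<le> N - m \<and> N - m < L+1 then - 2 * Phi {N - m<..N} L (L+1) x else 0))
          = eD (N-L) * (- 2 * Phi {L<..N} L (L+1) x)"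
        by (subst sum_single[where a="N-L"]) (use L2 LN NL in auto)
      have det: "(2 * Phi {0<..L} 1 (L+1) x) * (- 2 * Phi {L<..N} L (L+1) x)
          - (2 * Phi {0<..L} L (L+1) x) * (- 2 * Phi {L<..N} 1 (L+1) x) \<noteq> 0"
        using gL[OF L2 LN2] unfolding detL_def N_def[symmetric] by (simp add: algebra_simps)
      have new: "bU L = 0 \<and> eD (N-L) = 0"
        by (rule lin2[OF _ _ det]) (use E1 u1 d1 E2 u2 d2 in \<open>simp_all add: algebra_simps\<close>)
      show ?thesis
      proof (intro conjI ballI impI)
        fix m assume m: "m \<in> {2..Suc L - 1}"
        show "bU m = 0"
        proof (cases "m = L")
          case True then show ?thesis using new by simp
        next
          case False then have "m \<in> {2..L-1}" using m by auto
          then show ?thesis using IH by auto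
        qed
      next
        fix m assume m: "m \<in> {N - Suc L + 1..N - 1}" "2 \<le> m"
        show "eD m = 0"
        proof (cases "m = N - L")
          case True then show ?thesis using new by simp
        next
          case False then have "m \<in> {N-L+1..N-1}" using m LN by auto
          then show ?thesis using IH m by auto
        qed
      qed
    qed
  qed
  have allE: "\<forall>m\<in>{2..N-1}. eD m = 0" and bl: "\<forall>m\<in>{2..N-2}. bU m = 0"
  proof -
    show "\<forall>m\<in>{2..N-1}. eD m = 0"
    proof (cases "N \<ge> 3")
      case True then show ?thesis using IND[of "N-1"] by auto
    next
      case False then show ?thesis by auto
    qed
    show "\<forall>m\<in>{2..N-2}. bU m = 0"
    proof (cases "N \<ge> 3")
      case True then show ?thesis using IND[of "N-1"] by auto
    next
      case False then show ?thesis by auto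
    qed
  qed
  have bN1: "bU (N-1) = 0" if N3: "N \<ge> 3"
  proof -
    have E: "(\<Sum>m\<in>{2..N}. bU m * (if N-1 \<le> m \<and> m < N then 2 * Phi {0<..m} (N-1) N x else 0))
      + (\<Sum>m\<in>{2..N-1}. eD m * (if N-1 \<le> N - m \<and> N - m < N then - 2 * Phi {N - m<..N} (N-1) N x else 0)) = 0"
      using ECR[of "N-1" N] N3 by simp
    have u: "(\<Sum>m\<in>{2..N}. bU m * (if N-1 \<le> m \<and> m < N then 2 * Phi {0<..m} (N-1) N x else 0))
       = bU (N-1) * (2 * Phi {0<..N-1} (N-1) N x)"
      by (subst sum_single[where a="N-1"]) (use N3 in auto)
    have d: "(\<Sum>m\<in>{2..N-1}. eD m * (if N-1 \<le> N - m \<and> N - m < N then - 2 * Phi {N - m<..N} (N-1) N x else 0)) = 0"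
      by (rule sum.neutral) auto
    have "bU (N-1) * (2 * Phi {0<..N-1} (N-1) N x) = 0" using E u d by simp
    then show ?thesis using gN[OF N3] by simp
  qed
  have bN: "bU N = 0"
  proof -
    let ?v = "VV (\<lambda>i. 0) (\<lambda>i. if i = 1 then 1 else 0) :: 'n phase"
    have u: "(\<Sum>m\<in>{2..N}. bU m * frechet_derivative (CA {0<..m}) (at x) ?v) = bU N * (2 * gF x)"
    proof (subst sum_single[where a=N])
      show "finite {2..N}" by simp
      show "N \<in> {2..N}" using N2 by simp
      fix m assume m: "m \<in> {2..N}" "m \<noteq> N"
      then have "m \<le> N - 2 \<or> m = N - 1" by auto
      then have "bU m = 0" using bl bN1 m by (cases "N \<ge> 3") auto
      then show "bU m * frechet_derivative (CA {0<..m}) (at x) ?v = 0" by simp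
    next
      have sub: "{0<..N} \<subseteq> {1..CARD('n)}" by (auto simp: N_def)
      show "bU N * frechet_derivative (CA {0<..N}) (at x) ?v = bU N * (2 * gF x)"
        unfolding fd_CA_Ep[OF sub] using N2 by (simp add: gF_def N_def)
    qed
    have d: "(\<Sum>m\<in>{2..N-1}. eD m * frechet_derivative (CA {N - m<..N}) (at x) ?v) = 0"
      by (rule sum.neutral) (use allE in auto)
    have "bU N * (2 * gF x) = 0" using EC[of ?v] u d by simp
    then show ?thesis using g1 by simp
  qed
  show ?thesis
  proof (intro conjI ballI)
    fix m assume m: "m \<in> {2..N}"
    show "bU m = 0"
    proof (cases "N \<ge> 3")
      case True
      then have "m \<le> N - 2 \<or> m = N - 1 \<or> m = N" using m by auto
      then show ?thesis using bl bN1[OF True] bN m by auto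
    next
      case False then have "m = N" using m N2 by auto
      then show ?thesis using bN by simp
    qed
  qed (use allE in auto)
qed


lemma sum_shift2: "(\<Sum>k<(n::nat). f (k+2)) = (\<Sum>m\<in>{2..n+1}. (f m :: real))"
  by (rule sum.reindex_bij_witness[of _ "\<lambda>m. m - 2" "\<lambda>k. k + 2"]) auto

lemma super_sum:
  fixes H I :: "'n::{finite,linorder} phase \<Rightarrow> real" and dv :: "('n phase \<Rightarrow> real) \<Rightarrow> real"
  assumes N2: "CARD('n) \<ge> 2"
  shows "(\<Sum>k<length ([H] @ map Cup [2..<CARD('n)+1] @ map Cdown [2..<CARD('n)] @ [I]).
            c k * dv (([H] @ map Cup [2..<CARD('n)+1] @ map Cdown [2..<CARD('n)] @ [I]) ! k))
    = c 0 * dv H + (\<Sum>m\<in>{2..CARD('n)}. c (m - 1) * dv (CA {0<..m}))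
      + (\<Sum>m\<in>{2..CARD('n)-1}. c (CARD('n) + m - 2) * dv (CA {CARD('n) - m<..CARD('n)}))
      + c (2 * CARD('n) - 2) * dv I"
proof -
  let ?N = "CARD('n)"
  let ?A = "map Cup [2..<?N+1] :: ('n phase \<Rightarrow> real) list"
  let ?B = "map Cdown [2..<?N] :: ('n phase \<Rightarrow> real) list"
  have lA: "length ?A = ?N - 1" and lB: "length ?B = ?N - 2" by auto
  have s1: "(\<Sum>k<length ?A. c (1 + k) * dv (?A ! k)) = (\<Sum>m\<in>{2..?N}. c (m - 1) * dv (CA {0<..m}))"
  proof -
    have "(\<Sum>k<length ?A. c (1 + k) * dv (?A ! k)) = (\<Sum>k<?N - 1. (\<lambda>m. c (m - 1) * dv (CA {0<..m})) (k+2))"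
      unfolding lA by (rule sum.cong) (auto simp: nth_upt Cup_CA)
    also have "\<dots> = (\<Sum>m\<in>{2..?N - 1 + 1}. c (m - 1) * dv (CA {0<..m}))" by (rule sum_shift2)
    finally show ?thesis using N2 by simp
  qed
  have s2: "(\<Sum>k<length ?B. c (1 + length ?A + k) * dv (?B ! k)) =
      (\<Sum>m\<in>{2..?N-1}. c (?N + m - 2) * dv (CA {?N - m<..?N}))"
  proof -
    have "(\<Sum>k<length ?B. c (1 + length ?A + k) * dv (?B ! k)) =
      (\<Sum>k<?N - 2. (\<lambda>m. c (?N + m - 2) * dv (CA {?N - m<..?N})) (k+2))"
      unfolding lB by (rule sum.cong) (use N2 in \<open>auto simp: nth_upt Cdown_CA\<close>)
    also have "\<dots> = (\<Sum>m\<in>{2..?N - 2 + 1}. c (?N + m - 2) * dv (CA {?N - m<..?N}))" by (rule sum_shift2)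
    finally show ?thesis using N2 by (simp add: Suc_diff_Suc numeral_2_eq_2)
  qed
  have e: "Suc (?N + ?N - Suc (Suc (Suc 0))) = ?N * 2 - 2" using N2 by arith
  show ?thesis
    unfolding sum_idx_append[where D=dv] s1[symmetric] s2[symmetric]
    using N2 by (simp add: lA lB algebra_simps) (simp add: e)
qed


lemma indep_super:
  fixes lam \<omega> :: real and x :: "'n::{finite,linorder} phase"
  defines "N \<equiv> CARD('n)"
  assumes N2: "N \<ge> 2" and nz: "1 + lam * qsq x \<noteq> 0" and i: "i \<in> {1..N}"
    and gi: "gI lam \<omega> i x \<noteq> 0"
    and g12: "N \<ge> 3 \<Longrightarrow> Phi {1<..N} 1 2 x \<noteq> 0"
    and gL: "\<And>L. 2 \<le> L \<Longrightarrow> L \<le> N - 2 \<Longrightarrow> detL L x \<noteq> 0"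
    and gN: "N \<ge> 3 \<Longrightarrow> Phi {0<..N-1} (N-1) N x \<noteq> 0"
    and g1: "gF x \<noteq> 0"
  shows "differentials_indep ([Ham lam \<omega>] @ map Cup [2..<N+1] @ map Cdown [2..<N] @ [Frad lam \<omega> i i]) x"
proof -
  let ?fs = "[Ham lam \<omega>] @ map Cup [2..<N+1] @ map Cdown [2..<N] @ [Frad lam \<omega> i i] :: ('n phase \<Rightarrow> real) list"
  have i': "i \<in> {1..CARD('n)}" using i by (simp add: N_def)
  have len: "length ?fs = 2 * N - 1" using N2 by simp
  have setd: "\<forall>f\<in>set ?fs. f differentiable (at x)"
  proof -
    have "Cup m differentiable (at x)" if "m \<in> {2..N}" for m
      unfolding Cup_CA by (rule CA_diff) (use that in \<open>auto simp: N_def\<close>)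
    moreover have "Cdown m differentiable (at x)" for m :: nat
      unfolding Cdown_CA by (rule CA_diff) auto
    moreover have "Ham lam \<omega> differentiable (at x)" by (rule grad_differentiable[OF grad_Ham[OF nz]])
    moreover have "Frad lam \<omega> i i differentiable (at x)" by (rule grad_differentiable[OF grad_Frad[OF nz i' i']])
    ultimately show ?thesis by auto
  qed
  show ?thesis unfolding differentials_indep_def
  proof (intro conjI allI impI)
    fix k assume kk: "k < length ?fs"
    show "(?fs ! k) differentiable (at x)" by (rule setd[rule_format]) (rule nth_mem[OF kk])
  next
    fix c :: "nat \<Rightarrow> real" and k
    assume h: "\<forall>v. (\<Sum>k<length ?fs. c k * frechet_derivative (?fs ! k) (at x) v) = 0"
    assume k: "k < length ?fs"
    have E: "c 0 * frechet_derivative (Ham lam \<omega>) (at x) v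
      + (\<Sum>m\<in>{2..N}. c (m - 1) * frechet_derivative (CA {0<..m}) (at x) v)
      + (\<Sum>m\<in>{2..N-1}. c (N + m - 2) * frechet_derivative (CA {N - m<..N}) (at x) v)
      + c (2 * N - 2) * frechet_derivative (Frad lam \<omega> i i) (at x) v = 0" for v
      using h[rule_format, of v] super_sum[OF N2[unfolded N_def], where dv="\<lambda>f. frechet_derivative f (at x) v"]
      unfolding N_def by simp
    have subU: "m \<in> {2..N} \<Longrightarrow> {0<..m} \<subseteq> {1..CARD('n)}" for m by (auto simp: N_def)
    have subD: "{N - m<..N} \<subseteq> {1..CARD('n)}" for m by (auto simp: N_def)
    have Z: "(\<Sum>m\<in>{2..N}. c (m - 1) * frechet_derivative (CA {0<..m}) (at x) v) = 0
        \<and> (\<Sum>m\<in>{2..N-1}. c (N + m - 2) * frechet_derivative (CA {N - m<..N}) (at x) v) = 0"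
      if "v = VV (\<lambda>i. 0) (qc x) \<or> v = VV (qc x) (\<lambda>i. - pc x i)" for v
      using that by (auto intro!: sum.neutral simp: fd_CA_0q[OF subU] fd_CA_qp[OF subU] fd_CA_0q[OF subD] fd_CA_qp[OF subD])
    have E1: "frechet_derivative (Ham lam \<omega>) (at x) (VV (\<lambda>i. 0) (qc x)) * c 0
        + frechet_derivative (Frad lam \<omega> i i) (at x) (VV (\<lambda>i. 0) (qc x)) * c (2 * N - 2) = 0"
      using E[of "VV (\<lambda>i. 0) (qc x)"] Z[of "VV (\<lambda>i. 0) (qc x)"] by (simp add: algebra_simps)
    have E2: "frechet_derivative (Ham lam \<omega>) (at x) (VV (qc x) (\<lambda>i. - pc x i)) * c 0
        + frechet_derivative (Frad lam \<omega> i i) (at x) (VV (qc x) (\<lambda>i. - pc x i)) * c (2 * N - 2) = 0"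
      using E[of "VV (qc x) (\<lambda>i. - pc x i)"] Z[of "VV (qc x) (\<lambda>i. - pc x i)"] by (simp add: algebra_simps)
    have det: "frechet_derivative (Ham lam \<omega>) (at x) (VV (\<lambda>i. 0) (qc x)) * frechet_derivative (Frad lam \<omega> i i) (at x) (VV (qc x) (\<lambda>i. - pc x i))
       - frechet_derivative (Ham lam \<omega>) (at x) (VV (qc x) (\<lambda>i. - pc x i)) * frechet_derivative (Frad lam \<omega> i i) (at x) (VV (\<lambda>i. 0) (qc x)) \<noteq> 0"
      unfolding det_gI[OF nz i'] using gi nz by simp
    have c0I: "c 0 = 0 \<and> c (2 * N - 2) = 0" by (rule lin2[OF E1 E2 det])
    have EC: "(\<Sum>m\<in>{2..N}. c (m - 1) * frechet_derivative (CA {0<..m}) (at x) v)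
        + (\<Sum>m\<in>{2..N-1}. c (N + m - 2) * frechet_derivative (CA {N - m<..N}) (at x) v) = 0" for v
      using E[of v] c0I by simp
    have CC0: "(\<forall>m\<in>{2..CARD('n)}. c (m - 1) = 0) \<and> (\<forall>m\<in>{2..CARD('n)-1}. c (CARD('n) + m - 2) = 0)"
      by (rule C_part[where bU="\<lambda>m. c (m - 1)" and eD="\<lambda>m. c (CARD('n) + m - 2)", OF N2[unfolded N_def]])
         (use EC g12 gL gN g1 in \<open>simp_all add: N_def\<close>)
    then have CC: "(\<forall>m\<in>{2..N}. c (m - 1) = 0) \<and> (\<forall>m\<in>{2..N-1}. c (N + m - 2) = 0)"
      by (simp add: N_def)
    show "c k = 0"
    proof -
      have "k = 0 \<or> (1 \<le> k \<and> k \<le> N - 1) \<or> (N \<le> k \<and> k \<le> 2 * N - 3) \<or> k = 2 * N - 2" using k len by auto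
      moreover
      { assume "1 \<le> k \<and> k \<le> N - 1"
        then have "k + 1 \<in> {2..N}" "k + 1 - 1 = k" by auto
        then have "c k = 0" using CC by metis }
      moreover
      { assume a: "N \<le> k \<and> k \<le> 2 * N - 3"
        then have "k + 2 - N \<in> {2..N-1}" "N + (k + 2 - N) - 2 = k" using N2 by auto
        then have "c k = 0" using CC by metis }
      ultimately show ?thesis using c0I by auto
    qed
  qed
qed


definition pt :: "real \<Rightarrow> nat set \<Rightarrow> real \<Rightarrow> nat set \<Rightarrow> 'n::{finite,linorder} phase" where
  "pt a Tq b Tp = VV (\<lambda>i. if i \<in> Tq then a else 0) (\<lambda>i. if i \<in> Tp then b else 0)"

lemma qc_pt: "i \<in> {1..CARD('n)} \<Longrightarrow> qc (pt a Tq b Tp :: 'n::{finite,linorder} phase) i = (if i \<in> Tq then a else 0)"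
  by (simp add: pt_def)
lemma pc_pt: "i \<in> {1..CARD('n)} \<Longrightarrow> pc (pt a Tq b Tp :: 'n::{finite,linorder} phase) i = (if i \<in> Tp then b else 0)"
  by (simp add: pt_def)

lemma sum_ind: "finite A \<Longrightarrow> (\<Sum>i\<in>A. if i \<in> T then c else 0) = of_nat (card (A \<inter> T)) * (c::real)"
  by (simp add: sum.If_cases Int_def)

context fixes y :: "'n::{finite,linorder} phase" begin
end

lemma QA_pt: "A \<subseteq> {1..CARD('n)} \<Longrightarrow> QA A (pt a Tq b Tp :: 'n::{finite,linorder} phase) = of_nat (card (A \<inter> Tq)) * a^2"
proof -
  assume A: "A \<subseteq> {1..CARD('n)}"
  then have f: "finite A" using finite_subset by blast
  have "QA A (pt a Tq b Tp :: 'n phase) = (\<Sum>i\<in>A. if i \<in> Tq then a^2 else 0)"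
    unfolding QA_def by (rule sum.cong) (use A in \<open>auto simp: qc_pt\<close>)
  then show ?thesis by (simp add: sum_ind[OF f])
qed

lemma PA_pt: "A \<subseteq> {1..CARD('n)} \<Longrightarrow> PA A (pt a Tq b Tp :: 'n::{finite,linorder} phase) = of_nat (card (A \<inter> Tp)) * b^2"
proof -
  assume A: "A \<subseteq> {1..CARD('n)}"
  then have f: "finite A" using finite_subset by blast
  have "PA A (pt a Tq b Tp :: 'n phase) = (\<Sum>i\<in>A. if i \<in> Tp then b^2 else 0)"
    unfolding PA_def by (rule sum.cong) (use A in \<open>auto simp: pc_pt\<close>)
  then show ?thesis by (simp add: sum_ind[OF f])
qed

lemma SA_pt: "A \<subseteq> {1..CARD('n)} \<Longrightarrow> SA A (pt a Tq b Tp :: 'n::{finite,linorder} phase) = of_nat (card (A \<inter> (Tq \<inter> Tp))) * (a * b)"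
proof -
  assume A: "A \<subseteq> {1..CARD('n)}"
  then have f: "finite A" using finite_subset by blast
  have "SA A (pt a Tq b Tp :: 'n phase) = (\<Sum>i\<in>A. if i \<in> Tq \<inter> Tp then a * b else 0)"
    unfolding SA_def by (rule sum.cong) (use A in \<open>auto simp: qc_pt pc_pt\<close>)
  then show ?thesis by (simp only: sum_ind[OF f])
qed

lemma qsq_pt: "qsq (pt a Tq b Tp :: 'n::{finite,linorder} phase) = of_nat (card ({1..CARD('n)} \<inter> Tq)) * a^2"
  using QA_pt[where 'n='n, of "{1..CARD('n)}" a Tq b Tp] by (simp add: QA_def qsq_def)
lemma psq_pt: "psq (pt a Tq b Tp :: 'n::{finite,linorder} phase) = of_nat (card ({1..CARD('n)} \<inter> Tp)) * b^2"
  using PA_pt[where 'n='n, of "{1..CARD('n)}" a Tq b Tp] by (simp add: PA_def psq_def)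

lemma wit_gH: "CARD('n::{finite,linorder}) \<ge> 1 \<Longrightarrow> gH lam \<omega> (pt 0 {} 1 {1} :: 'n phase) \<noteq> 0"
  unfolding gH_def qsq_pt psq_pt by simp

lemma wit_gU: "m \<in> {2..CARD('n::{finite,linorder})} \<Longrightarrow> gU m (pt 1 {1} 1 {m} :: 'n phase) \<noteq> 0"
proof -
  assume m: "m \<in> {2..CARD('n)}"
  have A: "{0<..m} \<subseteq> {1..CARD('n)}" using m by auto
  have "{0<..m} \<inter> {1} = {1}" "{0<..m} \<inter> ({1} \<inter> {m}) = {}" using m by auto
  then show ?thesis unfolding gU_def QA_pt[OF A] SA_pt[OF A] using m by (simp add: qc_pt pc_pt)
qed

lemma wit_gD: "m \<in> {2..CARD('n::{finite,linorder})} \<Longrightarrow> gD m (pt 1 {CARD('n)} 1 {CARD('n) - m + 1} :: 'n phase) \<noteq> 0"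
proof -
  assume m: "m \<in> {2..CARD('n)}"
  have A: "{CARD('n) - m<..CARD('n)} \<subseteq> {1..CARD('n)}" by auto
  have "{CARD('n) - m<..CARD('n)} \<inter> {CARD('n)} = {CARD('n)}"
    "{CARD('n) - m<..CARD('n)} \<inter> ({CARD('n)} \<inter> {CARD('n) - m + 1}) = {}" using m by auto
  moreover have r: "Suc (CARD('n) - m) \<in> {1..CARD('n)}" using m by auto
  ultimately show ?thesis unfolding gD_def QA_pt[OF A] SA_pt[OF A] using m by (simp add: qc_pt[OF r] pc_pt[OF r])
qed

lemma wit_pc: "j \<in> {1..CARD('n::{finite,linorder})} \<Longrightarrow> pc (pt 0 {} 1 {j} :: 'n phase) j \<noteq> 0"
  by (simp add: pc_pt)

lemma wit_gF: "CARD('n::{finite,linorder}) \<ge> 2 \<Longrightarrow> gF (pt 1 {2} 1 {1} :: 'n phase) \<noteq> 0"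
proof -
  assume N: "CARD('n) \<ge> 2"
  have A: "{0<..CARD('n)} \<subseteq> {1..CARD('n)}" by auto
  have "{0<..CARD('n)} \<inter> {2} = {2}" "{0<..CARD('n)} \<inter> ({2} \<inter> {1}) = {}" using N by auto
  then show ?thesis unfolding gF_def QA_pt[OF A] SA_pt[OF A] using N by (simp add: qc_pt pc_pt)
qed

lemma wit_g12: "CARD('n::{finite,linorder}) \<ge> 3 \<Longrightarrow> Phi {1<..CARD('n)} 1 2 (pt 1 {1,2} 1 {CARD('n)} :: 'n phase) \<noteq> 0"
proof -
  assume N: "CARD('n) \<ge> 3"
  have A: "{1<..CARD('n)} \<subseteq> {1..CARD('n)}" by auto
  have "{1<..CARD('n)} \<inter> {CARD('n)} = {CARD('n)}" "{1<..CARD('n)} \<inter> ({1,2} \<inter> {CARD('n)}) = {}" using N by auto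
  then show ?thesis unfolding Phi_def QA_pt[OF A] PA_pt[OF A] SA_pt[OF A] using N by (simp add: qc_pt pc_pt)
qed

lemma wit_gN: "CARD('n::{finite,linorder}) \<ge> 3 \<Longrightarrow>
   Phi {0<..CARD('n)-1} (CARD('n)-1) (CARD('n)) (pt 1 {CARD('n)-1, CARD('n)} 1 {1} :: 'n phase) \<noteq> 0"
proof -
  assume N: "CARD('n) \<ge> 3"
  have A: "{0<..CARD('n)-1} \<subseteq> {1..CARD('n)}" by auto
  have "{0<..CARD('n)-1} \<inter> {1} = {1}" "{0<..CARD('n)-1} \<inter> ({CARD('n)-1, CARD('n)} \<inter> {1}) = {}" using N by auto
  then show ?thesis unfolding Phi_def QA_pt[OF A] PA_pt[OF A] SA_pt[OF A] using N by (simp add: qc_pt pc_pt)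
qed

lemma wit_detL: "2 \<le> L \<Longrightarrow> L \<le> CARD('n::{finite,linorder}) - 2 \<Longrightarrow>
   detL L (pt 1 {L, L+2} 1 {1, L+1, L+2} :: 'n phase) \<noteq> 0"
proof -
  assume L: "2 \<le> L" "L \<le> CARD('n) - 2"
  have A: "{0<..L} \<subseteq> {1..CARD('n)}" using L by auto
  have B: "{L<..CARD('n)} \<subseteq> {1..CARD('n)}" by auto
  have c: "{0<..L} \<inter> {L, L+2} = {L}" "{0<..L} \<inter> {1, L+1, L+2} = {1}" "{0<..L} \<inter> ({L, L+2} \<inter> {1, L+1, L+2}) = {}"
    "{L<..CARD('n)} \<inter> {L, L+2} = {L+2}" "{L<..CARD('n)} \<inter> {1, L+1, L+2} = {L+1, L+2}"
    "{L<..CARD('n)} \<inter> ({L, L+2} \<inter> {1, L+1, L+2}) = {L+2}" using L by auto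
  have r: "1 \<in> {1..CARD('n)}" "L \<in> {1..CARD('n)}" "L+1 \<in> {1..CARD('n)}" using L by auto
  show ?thesis unfolding detL_def Phi_def QA_pt[OF A] PA_pt[OF A] SA_pt[OF A] QA_pt[OF B] PA_pt[OF B] SA_pt[OF B] c
    using L r by (simp add: qc_pt pc_pt)
qed

lemma wit_gI:
  fixes lam \<omega> :: real
  assumes N: "CARD('n::{finite,linorder}) \<ge> 2" and i: "i \<in> {1..CARD('n)}"
  shows "\<exists>y::'n phase. gI lam \<omega> i y \<noteq> 0"
proof -
  define k where "k = (if i = 1 then 2 else 1::nat)"
  have k: "k \<in> {1..CARD('n)}" "k \<noteq> i" using N i by (auto simp: k_def)
  obtain s :: real where s: "s \<noteq> 0" "1 + lam * s^2 \<noteq> 0"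
  proof (cases "lam = -1")
    case True then show ?thesis using that[of 2] by simp
  next
    case False then show ?thesis using that[of 1] by simp
  qed
  let ?y = "pt s {i} 1 {i, k} :: 'n phase"
  have U: "{1..CARD('n)} \<subseteq> {1..CARD('n)}" by simp
  have c: "{1..CARD('n)} \<inter> {i} = {i}" "{1..CARD('n)} \<inter> {i, k} = {i, k}" "{1..CARD('n)} \<inter> ({i} \<inter> {i, k}) = {i}"
    using i k by auto
  have "gI lam \<omega> i ?y = 2 * s * (1 + lam * s^2)^2"
    unfolding gI_def Let_def qsq_pt psq_pt SA_pt[OF U] c using i k
    by (simp add: qc_pt pc_pt algebra_simps power2_eq_square)
  then show ?thesis using s by (intro exI[of _ ?y]) simp
qed


lemma good_gH: "good (gH lam \<omega> :: 'n::{finite,linorder} phase \<Rightarrow> real)"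
  unfolding gH_def[abs_def] by (intro good_diff good_mult good_const good_qsq good_power)
lemma good_gU: "good (gU m :: 'n::{finite,linorder} phase \<Rightarrow> real)"
  unfolding gU_def[abs_def] by (intro good_diff good_mult good_QA good_qc good_pc)
lemma good_gD: "good (gD m :: 'n::{finite,linorder} phase \<Rightarrow> real)"
  unfolding gD_def[abs_def] by (intro good_diff good_mult good_QA good_qc good_pc)
lemma good_gF: "good (gF :: 'n::{finite,linorder} phase \<Rightarrow> real)"
  unfolding gF_def[abs_def] by (intro good_diff good_mult good_QA good_qc good_pc)
lemma good_Phi: "good (Phi A k l :: 'n::{finite,linorder} phase \<Rightarrow> real)"
  unfolding Phi_def[abs_def] by (intro good_diff good_mult good_add good_QA good_qc good_pc)
lemma good_detL: "good (detL L :: 'n::{finite,linorder} phase \<Rightarrow> real)"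
  unfolding detL_def[abs_def] by (intro good_diff good_mult good_Phi)
lemma good_gI: "good (gI lam \<omega> i :: 'n::{finite,linorder} phase \<Rightarrow> real)"
  unfolding gI_def[abs_def] Let_def
  by (intro good_diff good_mult good_add good_const good_qsq good_power good_QA good_qc good_pc good_minus)

lemma in_involution_set: "(\<And>f g. f \<in> set fs \<Longrightarrow> g \<in> set fs \<Longrightarrow> poisson_commute M f g) \<Longrightarrow> in_involution M fs"
  unfolding in_involution_def by (auto intro!: nth_mem)

lemma pc_CA_CA:
  fixes M :: "'n::{finite,linorder} phase set"
  assumes "A \<subseteq> {1..CARD('n)}" "B \<subseteq> {1..CARD('n)}" "A \<subseteq> B \<or> B \<subseteq> A"
  shows "poisson_commute M (CA A) (CA B)"
  unfolding poisson_commute_def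
proof (intro ballI conjI)
  fix x assume "x \<in> M"
  show "CA A differentiable (at x)" by (rule CA_diff) (use assms in auto)
  show "CA B differentiable (at x)" by (rule CA_diff) (use assms in auto)
  show "poisson (CA A) (CA B) x = 0"
    using assms poisson_CA_CA[of A B x] poisson_CA_CA[of B A x] poisson_anti[of "CA A" "CA B" x] by auto
qed

lemma pc_CA_H:
  fixes lam \<omega> :: real
  assumes "A \<subseteq> {1..CARD('n::{finite,linorder})}"
  shows "poisson_commute (phase_space lam :: 'n phase set) (CA A) (Ham lam \<omega>)"
    and "poisson_commute (phase_space lam :: 'n phase set) (Ham lam \<omega>) (CA A)"
  unfolding poisson_commute_def
proof (safe)
  fix x :: "'n phase" assume "x \<in> phase_space lam"
  then have nz: "1 + lam * qsq x \<noteq> 0" by (simp add: phase_space_def)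
  show "CA A differentiable (at x)" by (rule CA_diff[OF assms])
  show "Ham lam \<omega> differentiable (at x)" by (rule grad_differentiable[OF grad_Ham[OF nz]])
  show "poisson (CA A) (Ham lam \<omega>) x = 0" by (rule poisson_CA_Ham[OF assms nz])
  show "poisson (Ham lam \<omega>) (CA A) x = 0" using poisson_CA_Ham[OF assms nz] poisson_anti[of "Ham lam \<omega>" "CA A" x] by simp
  show "CA A differentiable (at x)" by (rule CA_diff[OF assms])
  show "Ham lam \<omega> differentiable (at x)" by (rule grad_differentiable[OF grad_Ham[OF nz]])
qed

lemma pc_H_H: "poisson_commute (phase_space lam :: 'n::{finite,linorder} phase set) (Ham lam \<omega>) (Ham lam \<omega>)"
  unfolding poisson_commute_def
  using grad_differentiable[OF grad_Ham] poisson_self by (auto simp: phase_space_def)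

theorem theorem1:
  fixes lam \<omega> :: real
  assumes N2: "CARD('n::{finite,linorder}) \<ge> 2"
  defines "M \<equiv> (phase_space lam :: 'n phase set)"
      and "N \<equiv> CARD('n)"
      and "H \<equiv> (Ham lam \<omega> :: 'n phase \<Rightarrow> real)"
  shows
    \<comment> \<open>(i) constants of motion\<close>
    "(\<forall>m\<in>{2..N}. poisson_commute M (Cup m) H \<and> poisson_commute M (Cdown m) H)
     \<and> (Cup N = (Cdown N :: 'n phase \<Rightarrow> real))
     \<and> (\<forall>i\<in>{1..N}. \<forall>j\<in>{1..N}. poisson_commute M (Frad lam \<omega> i j) H)
     \<and> (\<forall>x\<in>M. H x = (1/2) * (\<Sum>i=1..N. Frad lam \<omega> i i x))
     \<comment> \<open>(ii) three Liouville-integrable sets\<close>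
     \<and> (length (H # map Cup [2..<N+1]) = N
        \<and> funct_indep M (H # map Cup [2..<N+1]) \<and> in_involution M (H # map Cup [2..<N+1]))
     \<and> (length (H # map Cdown [2..<N+1]) = N
        \<and> funct_indep M (H # map Cdown [2..<N+1]) \<and> in_involution M (H # map Cdown [2..<N+1]))
     \<and> (length (map (\<lambda>i. Frad lam \<omega> i i) [1..<N+1]) = N
        \<and> funct_indep M (map (\<lambda>i. Frad lam \<omega> i i) [1..<N+1])
        \<and> in_involution M (map (\<lambda>i. Frad lam \<omega> i i) [1..<N+1]))
     \<comment> \<open>(iii) maximal superintegrability (C_(N) = C^(N) is listed once)\<close>
     \<and> (\<forall>i\<in>{1..N}.
          length ([H] @ map Cup [2..<N+1] @ map Cdown [2..<N] @ [Frad lam \<omega> i i]) = 2*N - 1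
          \<and> funct_indep M ([H] @ map Cup [2..<N+1] @ map Cdown [2..<N] @ [Frad lam \<omega> i i]))"
proof -
  have N2': "CARD('n) \<ge> 2" using N2 .
  have N2N: "N \<ge> 2" using N2 by (simp add: N_def)
  have Mo: "open M" by (simp add: M_def open_phase_space)
  have nzM: "1 + lam * qsq x \<noteq> 0" if "x \<in> M" for x using that by (simp add: M_def phase_space_def)
  have subU: "m \<le> N \<Longrightarrow> {0<..m} \<subseteq> {1..CARD('n)}" for m by (auto simp: N_def)
  have subD: "{N - m<..N} \<subseteq> {1..CARD('n)}" for m by (auto simp: N_def)
  have CupE: "Cup m = CA {0<..m}" for m :: nat by (rule Cup_CA)
  have CdE: "(Cdown m :: 'n phase \<Rightarrow> real) = CA {N - m<..N}" for m by (simp add: Cdown_CA N_def)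
  have NN: "{1..N} = {1..CARD('n)}" by (simp add: N_def)
  have P1: "\<forall>m\<in>{2..N}. poisson_commute M (Cup m) H \<and> poisson_commute M (Cdown m) H"
  proof
    fix m assume m: "m \<in> {2..N}"
    show "poisson_commute M (Cup m) H \<and> poisson_commute M (Cdown m) H"
      unfolding M_def H_def CupE CdE using pc_CA_H(1)[OF subU] pc_CA_H(1)[OF subD] m by auto
  qed
  have P2: "Cup N = (Cdown N :: 'n phase \<Rightarrow> real)" unfolding CupE CdE by simp
  have P3: "\<forall>i\<in>{1..N}. \<forall>j\<in>{1..N}. poisson_commute M (Frad lam \<omega> i j) H"
  proof (intro ballI)
    fix i j assume ij: "i \<in> {1..N}" "j \<in> {1..N}"
    then have ij': "i \<in> {1..CARD('n)}" "j \<in> {1..CARD('n)}" by (auto simp: N_def)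
    show "poisson_commute M (Frad lam \<omega> i j) H"
      unfolding poisson_commute_def H_def
      using grad_differentiable[OF grad_Frad[OF nzM ij']] grad_differentiable[OF grad_Ham[OF nzM]]
        poisson_Frad_Ham[OF nzM ij'] by auto
  qed
  have P4: "\<forall>x\<in>M. H x = (1/2) * (\<Sum>i=1..N. Frad lam \<omega> i i x)"
    using Ham_Frad_sum[OF nzM] by (simp add: H_def N_def)
  have setU: "set (map gU [2..<N+1]) = gU ` {2..N}" by auto
  have setCup: "set (map Cup [2..<N+1]) = Cup ` {2..N}" by auto
  have P5: "length (H # map Cup [2..<N+1]) = N
        \<and> funct_indep M (H # map Cup [2..<N+1]) \<and> in_involution M (H # map Cup [2..<N+1])"
  proof (intro conjI)
    show "length (H # map Cup [2..<N+1]) = N" using N2N by simp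
    show "funct_indep M (H # map Cup [2..<N+1])"
    proof (rule funct_indep_intro[OF Mo, where gs="gH lam \<omega> # map gU [2..<N+1]"])
      show "\<forall>g\<in>set (gH lam \<omega> # map gU [2..<N+1] :: ('n phase \<Rightarrow> real) list). good g \<and> (\<exists>y. g y \<noteq> 0)"
      proof
        fix g assume "g \<in> set (gH lam \<omega> # map gU [2..<N+1] :: ('n phase \<Rightarrow> real) list)"
        then have "g = gH lam \<omega> \<or> (\<exists>m\<in>{2..CARD('n)}. g = gU m)" by (auto simp: N_def)
        then show "good g \<and> (\<exists>y. g y \<noteq> 0)"
        proof (elim disjE bexE)
          assume "g = gH lam \<omega>"
          moreover have "gH lam \<omega> (pt 0 {} 1 {1} :: 'n phase) \<noteq> 0" by (rule wit_gH) (use N2' in simp)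
          ultimately show ?thesis using good_gH by blast
        next
          fix m assume m: "m \<in> {2..CARD('n)}" "g = gU m"
          then show ?thesis using good_gU wit_gU[OF m(1)] by blast
        qed
      qed
      fix x assume x: "x \<in> M" and g: "\<forall>g\<in>set (gH lam \<omega> # map gU [2..<N+1]). g x \<noteq> 0"
      show "differentials_indep (H # map Cup [2..<N+1]) x"
        unfolding H_def N_def by (rule indep_Cup[OF nzM[OF x]]) (use g in \<open>auto simp: N_def\<close>)
    qed
    show "in_involution M (H # map Cup [2..<N+1])"
    proof (rule in_involution_set)
      fix f g assume f: "f \<in> set (H # map Cup [2..<N+1])" and g: "g \<in> set (H # map Cup [2..<N+1])"
      have cases: "F = H \<or> (\<exists>m\<in>{2..N}. F = CA {0<..m})" if "F \<in> set (H # map Cup [2..<N+1])" for F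
        using that unfolding setCup CupE by auto
      show "poisson_commute M f g"
        using cases[OF f] cases[OF g]
      proof (elim disjE bexE)
        show "f = H \<Longrightarrow> g = H \<Longrightarrow> poisson_commute M f g" unfolding M_def H_def using pc_H_H by simp
      next
        fix m assume "f = H" "m \<in> {2..N}" "g = CA {0<..m}"
        then show "poisson_commute M f g" unfolding M_def H_def using pc_CA_H(2)[OF subU] by auto
      next
        fix m assume "f = CA {0<..m}" "m \<in> {2..N}" "g = H"
        then show "poisson_commute M f g" unfolding M_def H_def using pc_CA_H(1)[OF subU] by auto
      next
        fix m m' assume a: "f = CA {0<..m}" "m \<in> {2..N}" "g = CA {0<..m'}" "m' \<in> {2..N}"
        have "{0<..m} \<subseteq> {0<..m'} \<or> {0<..m'} \<subseteq> {0<..m}" by (cases "m \<le> m'") auto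
        then show "poisson_commute M f g" using pc_CA_CA[OF subU[of m] subU[of m'], of M] a by auto
      qed
    qed
  qed
  have setD: "set (map gD [2..<N+1]) = gD ` {2..N}" by auto
  have setCd: "set (map Cdown [2..<N+1]) = Cdown ` {2..N}" by auto
  have P6: "length (H # map Cdown [2..<N+1]) = N
        \<and> funct_indep M (H # map Cdown [2..<N+1]) \<and> in_involution M (H # map Cdown [2..<N+1])"
  proof (intro conjI)
    show "length (H # map Cdown [2..<N+1]) = N" using N2N by simp
    show "funct_indep M (H # map Cdown [2..<N+1])"
    proof (rule funct_indep_intro[OF Mo, where gs="gH lam \<omega> # map gD [2..<N+1]"])
      show "\<forall>g\<in>set (gH lam \<omega> # map gD [2..<N+1] :: ('n phase \<Rightarrow> real) list). good g \<and> (\<exists>y. g y \<noteq> 0)"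
      proof
        fix g assume "g \<in> set (gH lam \<omega> # map gD [2..<N+1] :: ('n phase \<Rightarrow> real) list)"
        then have "g = gH lam \<omega> \<or> (\<exists>m\<in>{2..CARD('n)}. g = gD m)" by (auto simp: N_def)
        then show "good g \<and> (\<exists>y. g y \<noteq> 0)"
        proof (elim disjE bexE)
          assume "g = gH lam \<omega>"
          moreover have "gH lam \<omega> (pt 0 {} 1 {1} :: 'n phase) \<noteq> 0" by (rule wit_gH) (use N2' in simp)
          ultimately show ?thesis using good_gH by blast
        next
          fix m assume m: "m \<in> {2..CARD('n)}" "g = gD m"
          then show ?thesis using good_gD wit_gD[OF m(1)] by blast
        qed
      qed
      fix x assume x: "x \<in> M" and g: "\<forall>g\<in>set (gH lam \<omega> # map gD [2..<N+1]). g x \<noteq> 0"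
      show "differentials_indep (H # map Cdown [2..<N+1]) x"
        unfolding H_def N_def by (rule indep_Cdown[OF nzM[OF x]]) (use g in \<open>auto simp: N_def\<close>)
    qed
    show "in_involution M (H # map Cdown [2..<N+1])"
    proof (rule in_involution_set)
      fix f g assume f: "f \<in> set (H # map Cdown [2..<N+1])" and g: "g \<in> set (H # map Cdown [2..<N+1])"
      have cases: "F = H \<or> (\<exists>m\<in>{2..N}. F = CA {N - m<..N})" if "F \<in> set (H # map Cdown [2..<N+1])" for F
        using that unfolding setCd CdE by auto
      have sub: "m \<le> m' \<Longrightarrow> {N - m<..N} \<subseteq> {N - m'<..N}" for m m' by auto
      show "poisson_commute M f g"
        using cases[OF f] cases[OF g]
      proof (elim disjE bexE)
        show "f = H \<Longrightarrow> g = H \<Longrightarrow> poisson_commute M f g" unfolding M_def H_def using pc_H_H by simp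
      next
        fix m assume "f = H" "m \<in> {2..N}" "g = CA {N - m<..N}"
        then show "poisson_commute M f g" unfolding M_def H_def using pc_CA_H(2)[OF subD] by auto
      next
        fix m assume "f = CA {N - m<..N}" "m \<in> {2..N}" "g = H"
        then show "poisson_commute M f g" unfolding M_def H_def using pc_CA_H(1)[OF subD] by auto
      next
        fix m m' assume a: "f = CA {N - m<..N}" "m \<in> {2..N}" "g = CA {N - m'<..N}" "m' \<in> {2..N}"
        have "{N - m<..N} \<subseteq> {N - m'<..N} \<or> {N - m'<..N} \<subseteq> {N - m<..N}" using sub by (cases "m \<le> m'") auto
        then show "poisson_commute M f g" using pc_CA_CA[OF subD[of m] subD[of m'], of M] a by auto
      qed
    qed
  qed
  have P7: "length (map (\<lambda>i. Frad lam \<omega> i i) [1..<N+1]) = N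
        \<and> funct_indep M (map (\<lambda>i. Frad lam \<omega> i i) [1..<N+1])
        \<and> in_involution M (map (\<lambda>i. Frad lam \<omega> i i) [1..<N+1])"
  proof (intro conjI)
    show "length (map (\<lambda>i. Frad lam \<omega> i i) [1..<N+1]) = N" by simp
    show "funct_indep M (map (\<lambda>i. Frad lam \<omega> i i) [1..<N+1])"
    proof (rule funct_indep_intro[OF Mo, where gs="map (\<lambda>j x. pc x j) [1..<N+1]"])
      show "\<forall>g\<in>set (map (\<lambda>j (x::'n phase). pc x j) [1..<N+1]). good g \<and> (\<exists>y. g y \<noteq> 0)"
      proof
        fix g assume "g \<in> set (map (\<lambda>j (x::'n phase). pc x j) [1..<N+1])"
        then obtain j where j: "j \<in> {1..CARD('n)}" "g = (\<lambda>x. pc x j)" by (auto simp: N_def less_Suc_eq_le)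
        show "good g \<and> (\<exists>y. g y \<noteq> 0)" using j wit_pc[OF j(1)] good_pc by blast
      qed
      fix x assume x: "x \<in> M" and g: "\<forall>g\<in>set (map (\<lambda>j x. pc x j) [1..<N+1]). g x \<noteq> 0"
      show "differentials_indep (map (\<lambda>i. Frad lam \<omega> i i) [1..<N+1]) x"
        unfolding N_def by (rule indep_Frad[OF nzM[OF x]]) (use g in \<open>auto simp: N_def\<close>)
    qed
    show "in_involution M (map (\<lambda>i. Frad lam \<omega> i i) [1..<N+1])"
    proof (rule in_involution_set)
      fix f g assume "f \<in> set (map (\<lambda>i. Frad lam \<omega> i i) [1..<N+1] :: ('n phase \<Rightarrow> real) list)"
        "g \<in> set (map (\<lambda>i. Frad lam \<omega> i i) [1..<N+1] :: ('n phase \<Rightarrow> real) list)"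
      then obtain i j where ij: "i \<in> {1..CARD('n)}" "j \<in> {1..CARD('n)}" "f = Frad lam \<omega> i i" "g = Frad lam \<omega> j j"
        by (auto simp: N_def less_Suc_eq_le)
      show "poisson_commute M f g"
        unfolding poisson_commute_def ij(3,4)
        using grad_differentiable[OF grad_Frad[OF nzM ij(1) ij(1)]] grad_differentiable[OF grad_Frad[OF nzM ij(2) ij(2)]]
          poisson_Frad_Frad[OF nzM ij(1,2)] by auto
    qed
  qed
  have P8: "\<forall>i\<in>{1..N}.
          length ([H] @ map Cup [2..<N+1] @ map Cdown [2..<N] @ [Frad lam \<omega> i i]) = 2*N - 1
          \<and> funct_indep M ([H] @ map Cup [2..<N+1] @ map Cdown [2..<N] @ [Frad lam \<omega> i i])"
  proof
    fix i assume i: "i \<in> {1..N}"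
    then have i': "i \<in> {1..CARD('n)}" by (simp add: N_def)
    let ?gs = "[gI lam \<omega> i, gF] @ (if N \<ge> 3 then [Phi {1<..N} 1 2, Phi {0<..N-1} (N-1) N] else []) @ map detL [2..<N-1] :: ('n phase \<Rightarrow> real) list"
    show "length ([H] @ map Cup [2..<N+1] @ map Cdown [2..<N] @ [Frad lam \<omega> i i]) = 2*N - 1
          \<and> funct_indep M ([H] @ map Cup [2..<N+1] @ map Cdown [2..<N] @ [Frad lam \<omega> i i])"
    proof
      show "length ([H] @ map Cup [2..<N+1] @ map Cdown [2..<N] @ [Frad lam \<omega> i i]) = 2*N - 1" using N2N by simp
      show "funct_indep M ([H] @ map Cup [2..<N+1] @ map Cdown [2..<N] @ [Frad lam \<omega> i i])"
      proof (rule funct_indep_intro[OF Mo, where gs="?gs"])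
        show "\<forall>g\<in>set ?gs. good g \<and> (\<exists>y. g y \<noteq> 0)"
        proof
          fix g assume g: "g \<in> set ?gs"
          have "g = gI lam \<omega> i \<or> g = gF \<or> (N \<ge> 3 \<and> (g = Phi {1<..N} 1 2 \<or> g = Phi {0<..N-1} (N-1) N))
              \<or> (\<exists>L\<in>{2..<N-1}. g = detL L)"
            using g by (cases "N \<ge> 3") auto
          then show "good g \<and> (\<exists>y. g y \<noteq> 0)"
          proof (elim disjE conjE bexE)
            assume "g = gI lam \<omega> i" then show ?thesis using good_gI wit_gI[OF N2' i'] by simp
          next
            assume "g = gF" then show ?thesis using good_gF wit_gF[OF N2'] by blast
          next
            assume "3 \<le> N" "g = Phi {1<..N} 1 2" then show ?thesis
              using good_Phi wit_g12[where 'n='n] unfolding N_def by blast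
          next
            assume "3 \<le> N" "g = Phi {0<..N-1} (N-1) N" then show ?thesis
              using good_Phi wit_gN[where 'n='n] unfolding N_def by blast
          next
            fix L assume a: "L \<in> {2..<N-1}" "g = detL L"
            then have "2 \<le> L" "L \<le> CARD('n) - 2" by (auto simp: N_def)
            then show ?thesis using a good_detL wit_detL[of L] by blast
          qed
        qed
        fix x assume x: "x \<in> M" and g: "\<forall>g\<in>set ?gs. g x \<noteq> 0"
        show "differentials_indep ([H] @ map Cup [2..<N+1] @ map Cdown [2..<N] @ [Frad lam \<omega> i i]) x"
          unfolding H_def N_def
          by (rule indep_super[OF N2' nzM[OF x] i']) (use g in \<open>auto simp: N_def\<close>)
      qed
    qed
  qed
  show ?thesis using P1 P2 P3 P4 P5 P6 P7 P8 by blast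
qed


end
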